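(* Let $k$ be a field of prime characteristic $p$ and $d$ a positive integer. Define $T$-spaces $S^{(d)}_n$ of $k_0\langle X\rangle$ by $S^{(d)}_1=\{S^{(d)}\}^S$ and $S^{(d)}_{n+1}=(S^{(d)}_nS^{(d)}_1)^S$ for $n\ge1$, where $S^{(d)}=S^{(d)}(x_1,\ldots,x_d)=\sum_{\sigma\in\Sigma_d}\prod_{i=1}^d x_{\sigma(i)}$. Then (i) for all $m,n\ge1$, $(S^{(d)}_mS^{(d)}_n)^S=S^{(d)}_{m+n}$; (ii) for all $m\ge1$, $S^{(d)}_{2m+1}\subseteq S^{(d)}_{m+1}+S^{(d)}_1$.
   Context: $X=\{x_1,x_2,\ldots\}$ is countably infinite; $k_0\langle X\rangle$ is the free associative (non-unital) $k$-algebra on $X$. A $T$-space is a $k$-subspace of $k_0\langle X\rangle$ invariant under every algebra endomorphism of $k_0\langle X\rangle$; $(A)^S$ is the $T$-space generated by a subset $A$. For subsets $A,B$, $AB=\{ab:a\in A,b\in B\}$. $\Sigma_d$ is the symmetric group on $d$ letters. *)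

theory Defs
  imports Main "HOL-Combinatorics.Permutations" "HOL-Computational_Algebra.Primes"
begin

text \<open>The free non-unital associative algebra k_0<X> on X = {x_0, x_1, ...}:
  elements are finitely supported coefficient functions on words (lists of
  variable indices), with coefficient 0 on the empty word.\<close>

type_synonym 'k fa = "nat list \<Rightarrow> 'k"

definition FA :: "('k::field) fa set" where
  "FA = {f. finite {w. f w \<noteq> 0} \<and> f [] = 0}"

definition fa_add :: "('k::field) fa \<Rightarrow> 'k fa \<Rightarrow> 'k fa" where
  "fa_add f g = (\<lambda>w. f w + g w)"

definition fa_smult :: "'k::field \<Rightarrow> 'k fa \<Rightarrow> 'k fa" where
  "fa_smult c f = (\<lambda>w. c * f w)"

definition fa_zero :: "('k::field) fa" where
  "fa_zero = (\<lambda>w. 0)"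

definition fa_mult :: "('k::field) fa \<Rightarrow> 'k fa \<Rightarrow> 'k fa" where
  "fa_mult f g = (\<lambda>w. \<Sum>i\<le>length w. f (take i w) * g (drop i w))"

definition fa_mono :: "nat list \<Rightarrow> ('k::field) fa" where
  "fa_mono v = (\<lambda>w. if w = v then 1 else 0)"

definition fa_endo :: "(('k::field) fa \<Rightarrow> 'k fa) \<Rightarrow> bool" where
  "fa_endo h \<longleftrightarrow> (\<forall>f\<in>FA. h f \<in> FA)
     \<and> (\<forall>f\<in>FA. \<forall>g\<in>FA. h (fa_add f g) = fa_add (h f) (h g))
     \<and> (\<forall>c. \<forall>f\<in>FA. h (fa_smult c f) = fa_smult c (h f))
     \<and> (\<forall>f\<in>FA. \<forall>g\<in>FA. h (fa_mult f g) = fa_mult (h f) (h g))"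

definition fa_subspace :: "('k::field) fa set \<Rightarrow> bool" where
  "fa_subspace V \<longleftrightarrow> V \<subseteq> FA \<and> fa_zero \<in> V
     \<and> (\<forall>f\<in>V. \<forall>g\<in>V. fa_add f g \<in> V) \<and> (\<forall>c. \<forall>f\<in>V. fa_smult c f \<in> V)"

definition T_space :: "('k::field) fa set \<Rightarrow> bool" where
  "T_space V \<longleftrightarrow> fa_subspace V \<and> (\<forall>h. fa_endo h \<longrightarrow> (\<forall>f\<in>V. h f \<in> V))"

definition T_gen :: "('k::field) fa set \<Rightarrow> 'k fa set" where
  "T_gen A = \<Inter>{V. T_space V \<and> A \<subseteq> V}"

definition set_mult :: "('k::field) fa set \<Rightarrow> 'k fa set \<Rightarrow> 'k fa set" where
  "set_mult A B = {fa_mult a b | a b. a \<in> A \<and> b \<in> B}"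

definition set_add :: "('k::field) fa set \<Rightarrow> 'k fa set \<Rightarrow> 'k fa set" where
  "set_add A B = {fa_add a b | a b. a \<in> A \<and> b \<in> B}"

definition S_poly :: "nat \<Rightarrow> ('k::field) fa" where
  "S_poly d = (\<lambda>w. \<Sum>\<sigma>\<in>{\<sigma>. \<sigma> permutes {1..d}}. fa_mono (map \<sigma> [1..<Suc d]) w)"

text \<open>S_n^(d) for n \<ge> 1 (index 0 is a junk value).\<close>
fun S_T :: "nat \<Rightarrow> nat \<Rightarrow> ('k::field) fa set" where
  "S_T d 0 = {}"
| "S_T d (Suc 0) = T_gen {S_poly d}"
| "S_T d (Suc (Suc n)) = T_gen (set_mult (S_T d (Suc n)) (S_T d (Suc 0)))"

end

theory Submission
  imports Defs
begin


primrec Gf :: "nat \<Rightarrow> 'i set \<Rightarrow> ('i \<Rightarrow> 'a::ring_1) \<Rightarrow> (nat \<Rightarrow> 'a) \<Rightarrow> 'a" where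
  "Gf 0 I \<psi> g = g 0"
| "Gf (Suc n) I \<psi> g = (\<Sum>i\<in>I. g 0 * \<psi> i * Gf n (I - {i}) \<psi> (\<lambda>k. g (Suc k)))"

definition ee :: "nat \<Rightarrow> 'a::ring_1 \<Rightarrow> nat \<Rightarrow> 'a" where
  "ee k x = (\<lambda>i. if i = k then x else 1)"

definition Fs :: "'i set \<Rightarrow> ('i \<Rightarrow> 'a::ring_1) \<Rightarrow> 'a" where
  "Fs I \<psi> = Gf (card I) I \<psi> (\<lambda>_. 1)"

lemma Gf_cong: "(\<And>i. i \<in> I \<Longrightarrow> \<psi> i = \<psi>' i) \<Longrightarrow> Gf n I \<psi> g = Gf n I \<psi>' g"
proof (induction n arbitrary: I g)
  case 0 then show ?case by simp
next
  case (Suc n)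
  have "\<And>i. i \<in> I \<Longrightarrow> Gf n (I - {i}) \<psi> (\<lambda>k. g (Suc k)) = Gf n (I - {i}) \<psi>' (\<lambda>k. g (Suc k))"
    by (rule Suc.IH) (use Suc.prems in auto)
  then show ?case unfolding Gf.simps
    by (intro sum.cong refl) (simp add: Suc.prems)
qed

lemma Gf_left: "x * Gf n I \<psi> g = Gf n I \<psi> (g(0 := x * g 0))"
proof (cases n)
  case 0 then show ?thesis by simp
next
  case (Suc m)
  have e: "(\<lambda>k. (g(0 := x * g 0)) (Suc k)) = (\<lambda>k. g (Suc k))" by auto
  show ?thesis unfolding Suc Gf.simps e
    by (simp add: sum_distrib_left mult.assoc)
qed

lemma Gf_right: "Gf n I \<psi> g * x = Gf n I \<psi> (g(n := g n * x))"
proof (induction n arbitrary: I g)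
  case 0 then show ?case by simp
next
  case (Suc n)
  have e: "(\<lambda>k. (g(Suc n := g (Suc n) * x)) (Suc k)) = (\<lambda>k. g (Suc k))(n := g (Suc n) * x)" by auto
  have "\<And>i. Gf n (I - {i}) \<psi> (\<lambda>k. g (Suc k)) * x = Gf n (I - {i}) \<psi> ((\<lambda>k. g (Suc k))(n := g (Suc n) * x))"
    using Suc.IH[of "I - {_}" "\<lambda>k. g (Suc k)"] by (simp add: fun_upd_def)
  then show ?case unfolding Gf.simps e
    by (simp add: sum_distrib_right mult.assoc)
qed

lemma Gf_insert:
  assumes "finite I" "a \<notin> I" "card I = n"
  shows "Gf (Suc n) (insert a I) \<psi> (\<lambda>_. 1) = (\<Sum>k\<le>n. Gf n I \<psi> (ee k (\<psi> a)))"
  using assms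
proof (induction n arbitrary: I)
  case 0
  then have "I = {}" by simp
  then show ?case by (simp add: ee_def)
next
  case (Suc n)
  have s1: "Gf (Suc (Suc n)) (insert a I) \<psi> (\<lambda>_. 1)
      = \<psi> a * Gf (Suc n) I \<psi> (\<lambda>_. 1) + (\<Sum>i\<in>I. \<psi> i * Gf (Suc n) (insert a (I - {i})) \<psi> (\<lambda>_. 1))"
  proof -
    have "insert a I - {a} = I" using Suc.prems by auto
    moreover have "\<And>i. i \<in> I \<Longrightarrow> insert a I - {i} = insert a (I - {i})" using Suc.prems by auto
    ultimately show ?thesis using Suc.prems
      by (simp add: sum.insert_remove cong: sum.cong)
  qed
  have s2: "\<psi> a * Gf (Suc n) I \<psi> (\<lambda>_. 1) = Gf (Suc n) I \<psi> (ee 0 (\<psi> a))"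
  proof -
    have "((\<lambda>_. 1)(0 := \<psi> a * 1)) = ee 0 (\<psi> a)" by (auto simp: ee_def)
    then show ?thesis using Gf_left[of "\<psi> a" "Suc n" I \<psi> "\<lambda>_. 1"] by simp
  qed
  have s3: "\<And>i. i \<in> I \<Longrightarrow> Gf (Suc n) (insert a (I - {i})) \<psi> (\<lambda>_. 1) = (\<Sum>k\<le>n. Gf n (I - {i}) \<psi> (ee k (\<psi> a)))"
    using Suc.prems by (intro Suc.IH) auto
  have s4: "(\<Sum>i\<in>I. \<psi> i * Gf (Suc n) (insert a (I - {i})) \<psi> (\<lambda>_. 1))
      = (\<Sum>k\<le>n. Gf (Suc n) I \<psi> (ee (Suc k) (\<psi> a)))"
  proof -
    have e: "\<And>k. (\<lambda>j. ee (Suc k) (\<psi> a) (Suc j)) = ee k (\<psi> a)" by (auto simp: ee_def)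
    have "(\<Sum>i\<in>I. \<psi> i * Gf (Suc n) (insert a (I - {i})) \<psi> (\<lambda>_. 1))
        = (\<Sum>i\<in>I. \<Sum>k\<le>n. \<psi> i * Gf n (I - {i}) \<psi> (ee k (\<psi> a)))"
      by (intro sum.cong refl) (simp only: s3 sum_distrib_left)
    also have "\<dots> = (\<Sum>k\<le>n. \<Sum>i\<in>I. \<psi> i * Gf n (I - {i}) \<psi> (ee k (\<psi> a)))"
      by (rule sum.swap)
    also have "\<dots> = (\<Sum>k\<le>n. Gf (Suc n) I \<psi> (ee (Suc k) (\<psi> a)))"
    proof (rule sum.cong[OF refl])
      fix k assume "k \<in> {..n}"
      have "ee (Suc k) (\<psi> a) 0 = 1" by (simp add: ee_def)
      then show "(\<Sum>i\<in>I. \<psi> i * Gf n (I - {i}) \<psi> (ee k (\<psi> a))) = Gf (Suc n) I \<psi> (ee (Suc k) (\<psi> a))"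
        by (simp only: Gf.simps e) simp
    qed
    finally show ?thesis .
  qed
  show ?case unfolding s1 s2 s4 by (simp only: sum.atMost_Suc_shift)
qed

lemma Gf_attach_left:
  assumes "finite I" "card I = n"
  shows "(\<Sum>j\<in>I. Gf n I (\<psi>(j := X * \<psi> j)) g) = (\<Sum>h<n. Gf n I \<psi> (g(h := g h * X)))"
  using assms
proof (induction n arbitrary: I g)
  case 0
  then show ?case by simp
next
  case (Suc n)
  let ?gs = "\<lambda>k. g (Suc k)"
  have inner: "\<And>i. i \<in> I \<Longrightarrow> (\<Sum>j\<in>I. g 0 * (\<psi>(j := X * \<psi> j)) i * Gf n (I - {i}) (\<psi>(j := X * \<psi> j)) ?gs)
     = g 0 * X * \<psi> i * Gf n (I - {i}) \<psi> ?gs + (\<Sum>h<n. g 0 * \<psi> i * Gf n (I - {i}) \<psi> (?gs(h := ?gs h * X)))"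
  proof -
    fix i assume i: "i \<in> I"
    have fin: "finite (I - {i})" "card (I - {i}) = n" using Suc.prems i by auto
    have "(\<Sum>j\<in>I. g 0 * (\<psi>(j := X * \<psi> j)) i * Gf n (I - {i}) (\<psi>(j := X * \<psi> j)) ?gs)
        = g 0 * (X * \<psi> i) * Gf n (I - {i}) (\<psi>(i := X * \<psi> i)) ?gs
          + (\<Sum>j\<in>I - {i}. g 0 * (\<psi>(j := X * \<psi> j)) i * Gf n (I - {i}) (\<psi>(j := X * \<psi> j)) ?gs)"
      using Suc.prems i by (simp add: sum.remove)
    also have "Gf n (I - {i}) (\<psi>(i := X * \<psi> i)) ?gs = Gf n (I - {i}) \<psi> ?gs"
      by (rule Gf_cong) auto
    also have "(\<Sum>j\<in>I - {i}. g 0 * (\<psi>(j := X * \<psi> j)) i * Gf n (I - {i}) (\<psi>(j := X * \<psi> j)) ?gs)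
        = g 0 * \<psi> i * (\<Sum>j\<in>I - {i}. Gf n (I - {i}) (\<psi>(j := X * \<psi> j)) ?gs)"
      by (subst sum_distrib_left) (rule sum.cong; auto)
    also have "(\<Sum>j\<in>I - {i}. Gf n (I - {i}) (\<psi>(j := X * \<psi> j)) ?gs) = (\<Sum>h<n. Gf n (I - {i}) \<psi> (?gs(h := ?gs h * X)))"
      by (rule Suc.IH[OF fin])
    finally show "?thesis i" by (simp only: sum_distrib_left mult.assoc)
  qed
  have "(\<Sum>j\<in>I. Gf (Suc n) I (\<psi>(j := X * \<psi> j)) g)
      = (\<Sum>i\<in>I. \<Sum>j\<in>I. g 0 * (\<psi>(j := X * \<psi> j)) i * Gf n (I - {i}) (\<psi>(j := X * \<psi> j)) ?gs)"
    by (simp only: Gf.simps) (rule sum.swap)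
  also have "\<dots> = (\<Sum>i\<in>I. g 0 * X * \<psi> i * Gf n (I - {i}) \<psi> ?gs) + (\<Sum>i\<in>I. \<Sum>h<n. g 0 * \<psi> i * Gf n (I - {i}) \<psi> (?gs(h := ?gs h * X)))"
    by (subst sum.distrib[symmetric]) (rule sum.cong[OF refl], rule inner)
  also have "(\<Sum>i\<in>I. g 0 * X * \<psi> i * Gf n (I - {i}) \<psi> ?gs) = Gf (Suc n) I \<psi> (g(0 := g 0 * X))"
  proof -
    have e: "(\<lambda>k. (g(0 := g 0 * X)) (Suc k)) = ?gs" by auto
    show ?thesis by (simp only: Gf.simps e) simp
  qed
  also have "(\<Sum>i\<in>I. \<Sum>h<n. g 0 * \<psi> i * Gf n (I - {i}) \<psi> (?gs(h := ?gs h * X))) = (\<Sum>h<n. Gf (Suc n) I \<psi> (g(Suc h := g (Suc h) * X)))"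
  proof -
    have e: "\<And>h. (\<lambda>k. (g(Suc h := g (Suc h) * X)) (Suc k)) = ?gs(h := ?gs h * X)" by auto
    have e0: "\<And>h. (g(Suc h := g (Suc h) * X)) 0 = g 0" by simp
    show ?thesis by (subst sum.swap) (simp only: Gf.simps e e0)
  qed
  finally show ?case by (simp only: sum.lessThan_Suc_shift)
qed

lemma Gf_attach_right:
  assumes "finite I" "card I = n"
  shows "(\<Sum>j\<in>I. Gf n I (\<psi>(j := \<psi> j * X)) g) = (\<Sum>h<n. Gf n I \<psi> (g(Suc h := X * g (Suc h))))"
  using assms
proof (induction n arbitrary: I g)
  case 0
  then show ?case by simp
next
  case (Suc n)
  let ?gs = "\<lambda>k. g (Suc k)"
  have inner: "\<And>i. i \<in> I \<Longrightarrow> (\<Sum>j\<in>I. g 0 * (\<psi>(j := \<psi> j * X)) i * Gf n (I - {i}) (\<psi>(j := \<psi> j * X)) ?gs)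
     = g 0 * \<psi> i * Gf n (I - {i}) \<psi> (?gs(0 := X * ?gs 0)) + (\<Sum>h<n. g 0 * \<psi> i * Gf n (I - {i}) \<psi> (?gs(Suc h := X * ?gs (Suc h))))"
  proof -
    fix i assume i: "i \<in> I"
    have fin: "finite (I - {i})" "card (I - {i}) = n" using Suc.prems i by auto
    have "(\<Sum>j\<in>I. g 0 * (\<psi>(j := \<psi> j * X)) i * Gf n (I - {i}) (\<psi>(j := \<psi> j * X)) ?gs)
        = g 0 * (\<psi> i * X) * Gf n (I - {i}) (\<psi>(i := \<psi> i * X)) ?gs
          + (\<Sum>j\<in>I - {i}. g 0 * (\<psi>(j := \<psi> j * X)) i * Gf n (I - {i}) (\<psi>(j := \<psi> j * X)) ?gs)"
      using Suc.prems i by (simp add: sum.remove)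
    also have "Gf n (I - {i}) (\<psi>(i := \<psi> i * X)) ?gs = Gf n (I - {i}) \<psi> ?gs"
      by (rule Gf_cong) auto
    also have "g 0 * (\<psi> i * X) * Gf n (I - {i}) \<psi> ?gs = g 0 * \<psi> i * Gf n (I - {i}) \<psi> (?gs(0 := X * ?gs 0))"
      using Gf_left[of X n "I - {i}" \<psi> ?gs] by (simp add: mult.assoc)
    also have "(\<Sum>j\<in>I - {i}. g 0 * (\<psi>(j := \<psi> j * X)) i * Gf n (I - {i}) (\<psi>(j := \<psi> j * X)) ?gs)
        = g 0 * \<psi> i * (\<Sum>j\<in>I - {i}. Gf n (I - {i}) (\<psi>(j := \<psi> j * X)) ?gs)"
      by (subst sum_distrib_left) (rule sum.cong; auto)
    also have "(\<Sum>j\<in>I - {i}. Gf n (I - {i}) (\<psi>(j := \<psi> j * X)) ?gs) = (\<Sum>h<n. Gf n (I - {i}) \<psi> (?gs(Suc h := X * ?gs (Suc h))))"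
      by (rule Suc.IH[OF fin])
    finally show "?thesis i" by (simp only: sum_distrib_left mult.assoc)
  qed
  have "(\<Sum>j\<in>I. Gf (Suc n) I (\<psi>(j := \<psi> j * X)) g)
      = (\<Sum>i\<in>I. \<Sum>j\<in>I. g 0 * (\<psi>(j := \<psi> j * X)) i * Gf n (I - {i}) (\<psi>(j := \<psi> j * X)) ?gs)"
    by (simp only: Gf.simps) (rule sum.swap)
  also have "\<dots> = (\<Sum>i\<in>I. g 0 * \<psi> i * Gf n (I - {i}) \<psi> (?gs(0 := X * ?gs 0))) + (\<Sum>i\<in>I. \<Sum>h<n. g 0 * \<psi> i * Gf n (I - {i}) \<psi> (?gs(Suc h := X * ?gs (Suc h))))"
    by (subst sum.distrib[symmetric]) (rule sum.cong[OF refl], rule inner)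
  also have "(\<Sum>i\<in>I. g 0 * \<psi> i * Gf n (I - {i}) \<psi> (?gs(0 := X * ?gs 0))) = Gf (Suc n) I \<psi> (g(Suc 0 := X * g (Suc 0)))"
  proof -
    have e: "(\<lambda>k. (g(Suc 0 := X * g (Suc 0))) (Suc k)) = ?gs(0 := X * ?gs 0)" by auto
    have e0: "(g(Suc 0 := X * g (Suc 0))) 0 = g 0" by simp
    show ?thesis by (simp only: Gf.simps e e0)
  qed
  also have "(\<Sum>i\<in>I. \<Sum>h<n. g 0 * \<psi> i * Gf n (I - {i}) \<psi> (?gs(Suc h := X * ?gs (Suc h)))) = (\<Sum>h<n. Gf (Suc n) I \<psi> (g(Suc (Suc h) := X * g (Suc (Suc h)))))"
  proof -
    have e: "\<And>h. (\<lambda>k. (g(Suc (Suc h) := X * g (Suc (Suc h)))) (Suc k)) = ?gs(Suc h := X * ?gs (Suc h))" by auto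
    have e0: "\<And>h. (g(Suc (Suc h) := X * g (Suc (Suc h)))) 0 = g 0" by simp
    show ?thesis by (subst sum.swap) (simp only: Gf.simps e e0)
  qed
  finally show ?case by (simp only: sum.lessThan_Suc_shift)
qed

lemma shift_sum: "(\<Sum>h<n. f (Suc h)) = (\<Sum>h\<le>n. f h) - (f 0 :: 'a::ab_group_add)"
  by (induction n) (simp_all add: algebra_simps)

lemma sum_combo:
  fixes A B :: "nat \<Rightarrow> nat \<Rightarrow> 'a::ab_group_add"
  assumes "\<And>h. A 0 h = B 0 h"
  shows "(\<Sum>k\<le>n. B k n) = (\<Sum>k\<le>n. A k n) + (\<Sum>k\<le>n. \<Sum>h<n. A k h) - (\<Sum>k\<le>n. \<Sum>h<n. A (Suc h) k)
           - (\<Sum>k\<le>n. \<Sum>h<n. B k h) + (\<Sum>k\<le>n. \<Sum>h<n. B (Suc h) k)"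
proof -
  have a1: "(\<Sum>k\<le>n. A k n) + (\<Sum>k\<le>n. \<Sum>h<n. A k h) = (\<Sum>k\<le>n. \<Sum>h\<le>n. A k h)"
    by (simp add: lessThan_Suc_atMost[symmetric] sum.distrib add.commute)
  have b1: "(\<Sum>k\<le>n. \<Sum>h<n. B k h) = (\<Sum>k\<le>n. \<Sum>h\<le>n. B k h) - (\<Sum>k\<le>n. B k n)"
    by (simp add: lessThan_Suc_atMost[symmetric] sum.distrib)
  have a2: "(\<Sum>k\<le>n. \<Sum>h<n. A (Suc h) k) = (\<Sum>k\<le>n. \<Sum>h\<le>n. A k h) - (\<Sum>k\<le>n. A 0 k)"
  proof -
    have "(\<Sum>k\<le>n. \<Sum>h<n. A (Suc h) k) = (\<Sum>h<n. \<Sum>k\<le>n. A (Suc h) k)" by (rule sum.swap)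
    also have "\<dots> = (\<Sum>h\<le>n. \<Sum>k\<le>n. A h k) - (\<Sum>k\<le>n. A 0 k)" by (rule shift_sum)
    finally show ?thesis .
  qed
  have b2: "(\<Sum>k\<le>n. \<Sum>h<n. B (Suc h) k) = (\<Sum>k\<le>n. \<Sum>h\<le>n. B k h) - (\<Sum>k\<le>n. B 0 k)"
  proof -
    have "(\<Sum>k\<le>n. \<Sum>h<n. B (Suc h) k) = (\<Sum>h<n. \<Sum>k\<le>n. B (Suc h) k)" by (rule sum.swap)
    also have "\<dots> = (\<Sum>h\<le>n. \<Sum>k\<le>n. B h k) - (\<Sum>k\<le>n. B 0 k)" by (rule shift_sum)
    finally show ?thesis .
  qed
  have ab: "(\<Sum>k\<le>n. A 0 k) = (\<Sum>k\<le>n. B 0 k)" using assms by simp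
  have a0: "(\<Sum>k\<le>n. A k n) = (\<Sum>k\<le>n. \<Sum>h\<le>n. A k h) - (\<Sum>k\<le>n. \<Sum>h<n. A k h)"
    using a1 by (simp add: algebra_simps)
  show ?thesis unfolding a0 b1 a2 b2 ab by (simp add: algebra_simps)
qed

lemma Fs_insert:
  assumes "finite J" "a \<notin> J"
  shows "Fs (insert a J) \<psi> = (\<Sum>k\<le>card J. Gf (card J) J \<psi> (ee k (\<psi> a)))"
  unfolding Fs_def card_insert_disjoint[OF assms] by (rule Gf_insert[OF assms refl])

lemma Fs_insert':
  assumes "finite J" "a \<notin> J" "\<And>i. i \<in> J \<Longrightarrow> \<psi> i = \<phi> i"
  shows "Fs (insert a J) \<psi> = (\<Sum>k\<le>card J. Gf (card J) J \<phi> (ee k (\<psi> a)))"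
  unfolding Fs_insert[OF assms(1,2)] by (intro sum.cong refl Gf_cong) (simp add: assms(3))

lemma key_identity:
  fixes \<phi> :: "'i \<Rightarrow> 'a::ring_1"
  assumes J: "finite J" "a \<notin> J"
  shows "M * Fs (insert a J) \<phi> * N =
     Fs (insert a J) (\<phi>(a := M * \<phi> a)) * N
   + (\<Sum>j\<in>J. Fs (insert a J) (\<phi>(a := M * \<phi> a, j := N * \<phi> j)))
   - (\<Sum>j\<in>J. Fs (insert a J) (\<phi>(a := N, j := \<phi> j * (M * \<phi> a))))
   - (\<Sum>j\<in>J. M * Fs (insert a J) (\<phi>(j := N * \<phi> j)))
   + (\<Sum>j\<in>J. M * Fs (insert a J) (\<phi>(a := N, j := \<phi> j * \<phi> a)))"
proof -
  define n where "n = card J"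
  define v where "v = \<phi> a"
  define A where "A = (\<lambda>k h. Gf n J \<phi> ((ee k (M * v))(h := ee k (M * v) h * N)))"
  define B where "B = (\<lambda>k h. Gf n J \<phi> (((ee k v)(h := ee k v h * N))(0 := M * ((ee k v)(h := ee k v h * N)) 0)))"
  have ja: "\<And>j. j \<in> J \<Longrightarrow> j \<noteq> a" using J by auto
  have T0: "M * Fs (insert a J) \<phi> * N = (\<Sum>k\<le>n. B k n)"
  proof -
    have "M * Fs (insert a J) \<phi> * N = (\<Sum>k\<le>n. M * Gf n J \<phi> (ee k v) * N)"
      by (simp add: Fs_insert[OF J] n_def v_def sum_distrib_left sum_distrib_right)
    also have "\<dots> = (\<Sum>k\<le>n. B k n)"
    proof (rule sum.cong[OF refl])
      fix k
      have "M * Gf n J \<phi> (ee k v) * N = Gf n J \<phi> ((ee k v)(0 := M * ee k v 0)) * N" by (simp add: Gf_left)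
      also have "\<dots> = Gf n J \<phi> (((ee k v)(0 := M * ee k v 0))(n := ((ee k v)(0 := M * ee k v 0)) n * N))" by (rule Gf_right)
      also have "((ee k v)(0 := M * ee k v 0))(n := ((ee k v)(0 := M * ee k v 0)) n * N) = ((ee k v)(n := ee k v n * N))(0 := M * ((ee k v)(n := ee k v n * N)) 0)"
        by (auto simp: fun_eq_iff mult.assoc)
      finally show "M * Gf n J \<phi> (ee k v) * N = B k n" by (simp only: B_def)
    qed
    finally show ?thesis .
  qed
  have T3: "Fs (insert a J) (\<phi>(a := M * \<phi> a)) * N = (\<Sum>k\<le>n. A k n)"
  proof -
    have "Fs (insert a J) (\<phi>(a := M * \<phi> a)) * N = (\<Sum>k\<le>n. Gf n J \<phi> (ee k (M * v)) * N)"
      by (subst Fs_insert'[OF J, of _ \<phi>]) (auto simp: ja n_def v_def sum_distrib_right)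
    also have "\<dots> = (\<Sum>k\<le>n. A k n)" by (simp add: A_def Gf_right)
    finally show ?thesis .
  qed
  have T4: "(\<Sum>j\<in>J. Fs (insert a J) (\<phi>(a := M * \<phi> a, j := N * \<phi> j))) = (\<Sum>k\<le>n. \<Sum>h<n. A k h)"
  proof -
    have "(\<Sum>j\<in>J. Fs (insert a J) (\<phi>(a := M * \<phi> a, j := N * \<phi> j)))
        = (\<Sum>j\<in>J. \<Sum>k\<le>n. Gf n J (\<phi>(j := N * \<phi> j)) (ee k (M * v)))"
      apply (rule sum.cong[OF refl])
      subgoal for j by (subst Fs_insert'[OF J, of _ "\<phi>(j := N * \<phi> j)"]) (use J in \<open>auto simp: ja n_def v_def\<close>)
      done
    also have "\<dots> = (\<Sum>k\<le>n. \<Sum>j\<in>J. Gf n J (\<phi>(j := N * \<phi> j)) (ee k (M * v)))" by (rule sum.swap)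
    also have "\<dots> = (\<Sum>k\<le>n. \<Sum>h<n. A k h)"
      unfolding A_def by (intro sum.cong refl Gf_attach_left) (use J n_def in auto)
    finally show ?thesis .
  qed
  have T5: "(\<Sum>j\<in>J. Fs (insert a J) (\<phi>(a := N, j := \<phi> j * (M * \<phi> a)))) = (\<Sum>k\<le>n. \<Sum>h<n. A (Suc h) k)"
  proof -
    have "(\<Sum>j\<in>J. Fs (insert a J) (\<phi>(a := N, j := \<phi> j * (M * \<phi> a))))
        = (\<Sum>j\<in>J. \<Sum>k\<le>n. Gf n J (\<phi>(j := \<phi> j * (M * v))) (ee k N))"
      apply (rule sum.cong[OF refl])
      subgoal for j by (subst Fs_insert'[OF J, of _ "\<phi>(j := \<phi> j * (M * v))"]) (use J in \<open>auto simp: ja n_def v_def\<close>)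
      done
    also have "\<dots> = (\<Sum>k\<le>n. \<Sum>j\<in>J. Gf n J (\<phi>(j := \<phi> j * (M * v))) (ee k N))" by (rule sum.swap)
    also have "\<dots> = (\<Sum>k\<le>n. \<Sum>h<n. Gf n J \<phi> ((ee k N)(Suc h := (M * v) * ee k N (Suc h))))"
      by (intro sum.cong refl Gf_attach_right) (use J n_def in auto)
    also have "\<dots> = (\<Sum>k\<le>n. \<Sum>h<n. A (Suc h) k)"
    proof (intro sum.cong refl)
      fix k h
      have "(ee k N)(Suc h := (M * v) * ee k N (Suc h)) = (ee (Suc h) (M * v))(k := ee (Suc h) (M * v) k * N)"
        by (auto simp: fun_eq_iff ee_def)
      then show "Gf n J \<phi> ((ee k N)(Suc h := (M * v) * ee k N (Suc h))) = A (Suc h) k" by (simp add: A_def)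
    qed
    finally show ?thesis .
  qed
  have T1: "(\<Sum>j\<in>J. M * Fs (insert a J) (\<phi>(j := N * \<phi> j))) = (\<Sum>k\<le>n. \<Sum>h<n. B k h)"
  proof -
    have "(\<Sum>j\<in>J. M * Fs (insert a J) (\<phi>(j := N * \<phi> j)))
        = (\<Sum>j\<in>J. \<Sum>k\<le>n. M * Gf n J (\<phi>(j := N * \<phi> j)) (ee k v))"
      apply (rule sum.cong[OF refl])
      subgoal for j by (subst Fs_insert'[OF J, of _ "\<phi>(j := N * \<phi> j)"]) (use J in \<open>auto simp: ja n_def v_def sum_distrib_left\<close>)
      done
    also have "\<dots> = (\<Sum>k\<le>n. M * (\<Sum>j\<in>J. Gf n J (\<phi>(j := N * \<phi> j)) (ee k v)))"
      by (subst sum.swap) (simp add: sum_distrib_left)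
    also have "\<dots> = (\<Sum>k\<le>n. M * (\<Sum>h<n. Gf n J \<phi> ((ee k v)(h := ee k v h * N))))"
      by (intro sum.cong refl arg_cong[where f="\<lambda>x. M * x"] Gf_attach_left) (use J n_def in auto)
    also have "\<dots> = (\<Sum>k\<le>n. \<Sum>h<n. B k h)"
      by (simp add: B_def sum_distrib_left Gf_left)
    finally show ?thesis .
  qed
  have T2: "(\<Sum>j\<in>J. M * Fs (insert a J) (\<phi>(a := N, j := \<phi> j * \<phi> a))) = (\<Sum>k\<le>n. \<Sum>h<n. B (Suc h) k)"
  proof -
    have "(\<Sum>j\<in>J. M * Fs (insert a J) (\<phi>(a := N, j := \<phi> j * \<phi> a)))
        = (\<Sum>j\<in>J. \<Sum>k\<le>n. M * Gf n J (\<phi>(j := \<phi> j * v)) (ee k N))"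
      apply (rule sum.cong[OF refl])
      subgoal for j by (subst Fs_insert'[OF J, of _ "\<phi>(j := \<phi> j * v)"]) (use J in \<open>auto simp: ja n_def v_def sum_distrib_left\<close>)
      done
    also have "\<dots> = (\<Sum>k\<le>n. M * (\<Sum>j\<in>J. Gf n J (\<phi>(j := \<phi> j * v)) (ee k N)))"
      by (subst sum.swap) (simp add: sum_distrib_left)
    also have "\<dots> = (\<Sum>k\<le>n. M * (\<Sum>h<n. Gf n J \<phi> ((ee k N)(Suc h := v * ee k N (Suc h)))))"
      by (intro sum.cong refl arg_cong[where f="\<lambda>x. M * x"] Gf_attach_right) (use J n_def in auto)
    also have "\<dots> = (\<Sum>k\<le>n. \<Sum>h<n. B (Suc h) k)"
    proof (intro sum.cong refl)
      fix k
      show "M * (\<Sum>h<n. Gf n J \<phi> ((ee k N)(Suc h := v * ee k N (Suc h)))) = (\<Sum>h<n. B (Suc h) k)"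
        unfolding sum_distrib_left
      proof (intro sum.cong refl)
        fix h
        have "((ee k N)(Suc h := v * ee k N (Suc h)))(0 := M * ((ee k N)(Suc h := v * ee k N (Suc h))) 0)
           = ((ee (Suc h) v)(k := ee (Suc h) v k * N))(0 := M * ((ee (Suc h) v)(k := ee (Suc h) v k * N)) 0)"
          by (auto simp: fun_eq_iff ee_def)
        then show "M * Gf n J \<phi> ((ee k N)(Suc h := v * ee k N (Suc h))) = B (Suc h) k"
          by (simp add: B_def Gf_left)
      qed
    qed
    finally show ?thesis .
  qed
  have AB: "\<And>h. A 0 h = B 0 h"
  proof -
    fix h
    have "(ee 0 (M * v))(h := ee 0 (M * v) h * N) = ((ee 0 v)(h := ee 0 v h * N))(0 := M * ((ee 0 v)(h := ee 0 v h * N)) 0)"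
      by (auto simp: fun_eq_iff ee_def mult.assoc)
    then show "A 0 h = B 0 h" by (simp add: A_def B_def)
  qed
  show ?thesis unfolding T0 T1 T2 T3 T4 T5 by (rule sum_combo[of A B, OF AB])
qed




lemma splits_eq: "{(u,v). u @ v = w} = (\<lambda>i. (take i w, drop i w)) ` {..length w}"
proof
  show "{(u,v). u @ v = w} \<subseteq> (\<lambda>i. (take i w, drop i w)) ` {..length w}"
  proof (rule subsetI)
    fix p assume "p \<in> {(u,v). u @ v = w}"
    then obtain u v where p: "p = (u,v)" "u @ v = w" by auto
    then show "p \<in> (\<lambda>i. (take i w, drop i w)) ` {..length w}"
      by (intro image_eqI[of _ _ "length u"]) auto
  qed
  show "(\<lambda>i. (take i w, drop i w)) ` {..length w} \<subseteq> {(u,v). u @ v = w}" by auto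
qed

lemma finite_splits: "finite {(u,v). u @ v = (w::'a list)}"
  unfolding splits_eq by simp

lemma finite_splits2: "finite {p. fst p @ snd p = (w::'a list)}"
  using finite_splits[of w] by (simp add: split_def)

lemma inj_splits: "inj_on (\<lambda>i. (take i w, drop i w)) {..length w}"
  by (auto simp: inj_on_def) (metis length_take min.absorb2)

lemma fa_mult_splits: "fa_mult f g w = (\<Sum>p\<in>{(u,v). u @ v = w}. f (fst p) * g (snd p))"
  unfolding fa_mult_def splits_eq by (simp add: sum.reindex[OF inj_splits])

lemma fa_mult_assoc: "fa_mult (fa_mult f g) h = fa_mult f (fa_mult g h)"
proof (rule ext)
  fix w
  have "fa_mult (fa_mult f g) h w = (\<Sum>p\<in>{(x,y). x @ y = w}. \<Sum>q\<in>{(u,v). u @ v = fst p}. f (fst q) * g (snd q) * h (snd p))"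
    by (simp add: fa_mult_splits sum_distrib_right)
  also have "\<dots> = (\<Sum>pq\<in>(SIGMA p:{(x,y). x @ y = w}. {(u,v). u @ v = fst p}). f (fst (snd pq)) * g (snd (snd pq)) * h (snd (fst pq)))"
    by (subst sum.Sigma) (auto simp: finite_splits finite_splits2 split_def)
  also have "\<dots> = (\<Sum>pq\<in>(SIGMA p:{(u,z). u @ z = w}. {(v,y). v @ y = snd p}). f (fst (fst pq)) * (g (fst (snd pq)) * h (snd (snd pq))))"
    by (rule sum.reindex_bij_witness[where i="\<lambda>((u,z),(v,y)). ((u @ v, y), (u, v))" and j="\<lambda>((x,y),(u,v)). ((u, v @ y), (v, y))"])
       (auto simp: mult.assoc)
  also have "\<dots> = (\<Sum>p\<in>{(u,z). u @ z = w}. \<Sum>q\<in>{(v,y). v @ y = snd p}. f (fst p) * (g (fst q) * h (snd q)))"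
    by (subst sum.Sigma) (auto simp: finite_splits finite_splits2 split_def)
  also have "\<dots> = fa_mult f (fa_mult g h) w"
    by (simp add: fa_mult_splits sum_distrib_left)
  finally show "fa_mult (fa_mult f g) h w = fa_mult f (fa_mult g h) w" .
qed

lemma fa_mult_one_left: "fa_mult (fa_mono []) f = f"
proof (rule ext)
  fix w
  have "fa_mult (fa_mono []) f w = (\<Sum>i\<le>length w. if i = 0 then f w else 0)"
    unfolding fa_mult_def fa_mono_def by (intro sum.cong refl) auto
  then show "fa_mult (fa_mono []) f w = f w" by simp
qed

lemma fa_mult_one_right: "fa_mult f (fa_mono []) = f"
proof (rule ext)
  fix w
  have "fa_mult f (fa_mono []) w = (\<Sum>i\<le>length w. if i = length w then f w else 0)"
    unfolding fa_mult_def fa_mono_def by (intro sum.cong refl) auto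
  then show "fa_mult f (fa_mono []) w = f w" by simp
qed

lemma fa_mult_add_left: "fa_mult (fa_add f g) h = fa_add (fa_mult f h) (fa_mult g h)"
  by (auto simp: fun_eq_iff fa_mult_def fa_add_def sum.distrib ring_distribs)

lemma fa_mult_add_right: "fa_mult h (fa_add f g) = fa_add (fa_mult h f) (fa_mult h g)"
  by (auto simp: fun_eq_iff fa_mult_def fa_add_def sum.distrib ring_distribs)

typedef ('k::field) fw = "UNIV :: 'k fa set" morphisms rep abs by auto

setup_lifting type_definition_fw

instantiation fw :: (field) ring_1
begin
lift_definition zero_fw :: "'a fw" is fa_zero .
lift_definition one_fw :: "'a fw" is "fa_mono []" .
lift_definition plus_fw :: "'a fw \<Rightarrow> 'a fw \<Rightarrow> 'a fw" is fa_add .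
lift_definition uminus_fw :: "'a fw \<Rightarrow> 'a fw" is "\<lambda>f w. - f w" .
lift_definition minus_fw :: "'a fw \<Rightarrow> 'a fw \<Rightarrow> 'a fw" is "\<lambda>f g w. f w - g w" .
lift_definition times_fw :: "'a fw \<Rightarrow> 'a fw \<Rightarrow> 'a fw" is fa_mult .
instance
proof
  fix a b c :: "'a fw"
  show "a + b + c = a + (b + c)" by transfer (simp add: fa_add_def add.assoc)
  show "a + b = b + a" by transfer (simp add: fa_add_def add.commute)
  show "0 + a = a" by transfer (simp add: fa_add_def fa_zero_def)
  show "- a + a = 0" by transfer (simp add: fa_add_def fa_zero_def)
  show "a - b = a + - b" by transfer (simp add: fa_add_def)
  show "a * b * c = a * (b * c)" by transfer (rule fa_mult_assoc)
  show "1 * a = a" by transfer (rule fa_mult_one_left)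
  show "a * 1 = a" by transfer (rule fa_mult_one_right)
  show "(a + b) * c = a * c + b * c" by transfer (rule fa_mult_add_left)
  show "a * (b + c) = a * b + a * c" by transfer (rule fa_mult_add_right)
  show "(0::'a fw) \<noteq> 1" by transfer (auto simp: fa_zero_def fa_mono_def fun_eq_iff)
qed
end

lift_definition sc :: "'k::field \<Rightarrow> 'k fw" is "\<lambda>c w. if w = [] then c else 0" .
lift_definition mn :: "nat list \<Rightarrow> ('k::field) fw" is fa_mono .

lemma rep_add: "rep (x + y) = fa_add (rep x) (rep y)" by transfer simp
lemma rep_mult: "rep (x * y) = fa_mult (rep x) (rep y)" by transfer simp
lemma rep_zero: "rep 0 = fa_zero" by transfer simp
lemma rep_minus: "rep (x - y) = (\<lambda>w. rep x w - rep y w)" by transfer simp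
lemma rep_uminus: "rep (- x) = (\<lambda>w. - rep x w)" by transfer simp

lemma rep_sc_mult: "rep (sc c * x) = fa_smult c (rep x)"
proof -
  have "fa_mult (\<lambda>w. if w = [] then c else 0) f = fa_smult c f" for f :: "'a fa"
  proof (rule ext)
    fix w
    have "fa_mult (\<lambda>w. if w = [] then c else 0) f w = (\<Sum>i\<le>length w. if i = 0 then c * f w else 0)"
      unfolding fa_mult_def by (intro sum.cong refl) auto
    then show "fa_mult (\<lambda>w. if w = [] then c else 0) f w = fa_smult c f w" by (simp add: fa_smult_def)
  qed
  then show ?thesis by transfer simp
qed

lemma rep_mult_sc: "rep (x * sc c) = fa_smult c (rep x)"
proof -
  have "fa_mult f (\<lambda>w. if w = [] then c else 0) = fa_smult c f" for f :: "'a fa"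
  proof (rule ext)
    fix w
    have "fa_mult f (\<lambda>w. if w = [] then c else 0) w = (\<Sum>i\<le>length w. if i = length w then c * f w else 0)"
      unfolding fa_mult_def by (intro sum.cong refl) auto
    then show "fa_mult f (\<lambda>w. if w = [] then c else 0) w = fa_smult c f w" by (simp add: fa_smult_def)
  qed
  then show ?thesis by transfer simp
qed

lemma sc_comm: "sc c * x = x * sc c"
  by (rule rep_inject[THEN iffD1]) (simp add: rep_sc_mult rep_mult_sc)

lemma sc_add: "sc (a + b) = sc a + sc b" by transfer (auto simp: fa_add_def)
lemma sc_mult: "sc (a * b) = sc a * sc b"
  by (rule rep_inject[THEN iffD1]) (auto simp: rep_sc_mult sc.rep_eq fa_smult_def fun_eq_iff)
lemma sc_zero: "sc 0 = 0" by transfer (auto simp: fa_zero_def)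
lemma sc_one: "sc 1 = 1" by transfer (auto simp: fa_mono_def)
lemma sc_sum: "finite S \<Longrightarrow> sc (\<Sum>x\<in>S. f x) = (\<Sum>x\<in>S. sc (f x))"
  by (induction S rule: finite_induct) (auto simp: sc_zero sc_add)

lemma fa_mono_append: "fa_mono (u @ v) = (fa_mult (fa_mono u) (fa_mono v) :: ('k::field) fa)"
  apply (rule ext)
  apply (simp only: fa_mult_splits)
  apply (subst sum.cong[OF refl, where h="\<lambda>p. if p = (u,v) then 1 else 0"])
   apply (auto simp: fa_mono_def)[1]
  apply (simp add: sum.delta[OF finite_splits] fa_mono_def)
  done

lemma mn_append: "mn (u @ v) = (mn u * mn v :: 'k::field fw)"
  by transfer (rule fa_mono_append)




lemma FA_zero: "fa_zero \<in> FA" by (simp add: FA_def fa_zero_def)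

lemma FA_add: "f \<in> FA \<Longrightarrow> g \<in> FA \<Longrightarrow> fa_add f g \<in> FA"
proof -
  assume f: "f \<in> FA" and g: "g \<in> FA"
  have "{w. fa_add f g w \<noteq> 0} \<subseteq> {w. f w \<noteq> 0} \<union> {w. g w \<noteq> 0}" by (auto simp: fa_add_def)
  then show ?thesis using f g unfolding FA_def by (auto simp: fa_add_def intro: finite_subset)
qed

lemma FA_smult: "f \<in> FA \<Longrightarrow> fa_smult c f \<in> FA"
proof -
  assume f: "f \<in> FA"
  have "{w. fa_smult c f w \<noteq> 0} \<subseteq> {w. f w \<noteq> 0}" by (auto simp: fa_smult_def)
  then show ?thesis using f unfolding FA_def by (auto simp: fa_smult_def intro: finite_subset)
qed

lemma FA_uminus: "f \<in> FA \<Longrightarrow> (\<lambda>w. - f w) \<in> FA"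
  unfolding FA_def by simp

lemma FA_minus: "f \<in> FA \<Longrightarrow> g \<in> FA \<Longrightarrow> (\<lambda>w. f w - g w) \<in> FA"
proof -
  assume f: "f \<in> FA" and g: "g \<in> FA"
  have "{w. f w - g w \<noteq> 0} \<subseteq> {w. f w \<noteq> 0} \<union> {w. g w \<noteq> 0}" by auto
  then show ?thesis using f g unfolding FA_def by (auto intro: finite_subset)
qed

lemma FA_mult: "f \<in> FA \<Longrightarrow> g \<in> FA \<Longrightarrow> fa_mult f g \<in> FA"
proof -
  assume f: "f \<in> FA" and g: "g \<in> FA"
  have "{w. fa_mult f g w \<noteq> 0} \<subseteq> (\<lambda>(u,v). u @ v) ` ({u. f u \<noteq> 0} \<times> {v. g v \<noteq> 0})"
  proof
    fix w assume "w \<in> {w. fa_mult f g w \<noteq> 0}"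
    then have "(\<Sum>p\<in>{(u,v). u @ v = w}. f (fst p) * g (snd p)) \<noteq> 0" by (simp add: fa_mult_splits)
    then obtain p where "p \<in> {(u,v). u @ v = w}" "f (fst p) * g (snd p) \<noteq> 0"
      by (meson sum.neutral)
    then show "w \<in> (\<lambda>(u,v). u @ v) ` ({u. f u \<noteq> 0} \<times> {v. g v \<noteq> 0})"
      by (intro image_eqI[of _ _ p]) auto
  qed
  moreover have "finite ((\<lambda>(u,v). u @ v) ` ({u. f u \<noteq> 0} \<times> {v. g v \<noteq> 0}))"
    using f g by (simp add: FA_def)
  moreover have "fa_mult f g [] = 0" using f g by (simp add: fa_mult_def FA_def)
  ultimately show ?thesis unfolding FA_def by (auto intro: finite_subset)
qed

lemma FA_mono: "L \<noteq> [] \<Longrightarrow> fa_mono L \<in> FA"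
proof -
  assume "L \<noteq> []"
  moreover have "{w. fa_mono L w \<noteq> (0::'a::field)} = {L}" by (auto simp: fa_mono_def)
  ultimately show ?thesis by (auto simp: FA_def fa_mono_def)
qed

definition inF :: "('k::field) fw \<Rightarrow> bool" where "inF x \<longleftrightarrow> rep x \<in> FA"

lemma inF_zero: "inF 0" by (simp add: inF_def rep_zero FA_zero)
lemma inF_add: "inF x \<Longrightarrow> inF y \<Longrightarrow> inF (x + y)" by (simp add: inF_def rep_add FA_add)
lemma inF_mult: "inF x \<Longrightarrow> inF y \<Longrightarrow> inF (x * y)" by (simp add: inF_def rep_mult FA_mult)
lemma inF_uminus: "inF x \<Longrightarrow> inF (- x)" by (simp add: inF_def rep_uminus FA_uminus)
lemma inF_minus: "inF x \<Longrightarrow> inF y \<Longrightarrow> inF (x - y)" by (simp add: inF_def rep_minus FA_minus)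
lemma inF_sc: "inF x \<Longrightarrow> inF (sc c * x)" by (simp add: inF_def rep_sc_mult FA_smult)
lemma inF_sum: "finite S \<Longrightarrow> (\<And>s. s \<in> S \<Longrightarrow> inF (x s)) \<Longrightarrow> inF (\<Sum>s\<in>S. x s)"
  by (induction S rule: finite_induct) (auto simp: inF_zero inF_add)
lemma inF_abs: "f \<in> FA \<Longrightarrow> inF (abs f)" by (simp add: inF_def abs_inverse)
lemma inF_mn: "L \<noteq> [] \<Longrightarrow> inF (mn L)" by (simp add: inF_def mn.rep_eq FA_mono)

lemma rep_sum: "finite S \<Longrightarrow> rep (\<Sum>s\<in>S. x s) w = (\<Sum>s\<in>S. rep (x s) w)"
  by (induction S rule: finite_induct) (auto simp: rep_zero rep_add fa_zero_def fa_add_def)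

lemma abs_add: "abs (fa_add f g) = abs f + abs g"
  by (metis abs_inverse rep_add rep_inverse UNIV_I)
lemma abs_mult: "abs (fa_mult f g) = abs f * abs g"
  by (metis abs_inverse rep_mult rep_inverse UNIV_I)
lemma abs_smult: "abs (fa_smult c f) = sc c * abs f"
  by (metis abs_inverse rep_sc_mult rep_inverse UNIV_I)

section \<open>Substitution\<close>

definition PW :: "(nat \<Rightarrow> ('k::field) fw) \<Rightarrow> nat list \<Rightarrow> 'k fw" where
  "PW \<phi> w = prod_list (map \<phi> w)"

definition subst :: "(nat \<Rightarrow> ('k::field) fw) \<Rightarrow> 'k fw \<Rightarrow> 'k fw" where
  "subst \<phi> x = (\<Sum>w\<in>{w. rep x w \<noteq> 0}. sc (rep x w) * PW \<phi> w)"

lemma subst_eq: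
  assumes "finite S" "{w. rep x w \<noteq> 0} \<subseteq> S"
  shows "subst \<phi> x = (\<Sum>w\<in>S. sc (rep x w) * PW \<phi> w)"
  unfolding subst_def by (rule sum.mono_neutral_left) (use assms in \<open>auto simp: sc_zero\<close>)

lemma supp_fin: "inF x \<Longrightarrow> finite {w. rep x w \<noteq> 0}" by (simp add: inF_def FA_def)

lemma subst_add:
  assumes "inF x" "inF y"
  shows "subst \<phi> (x + y) = subst \<phi> x + subst \<phi> y"
proof -
  let ?S = "{w. rep x w \<noteq> 0} \<union> {w. rep y w \<noteq> 0}"
  have fin: "finite ?S" using assms by (simp add: supp_fin)
  have "subst \<phi> (x + y) = (\<Sum>w\<in>?S. sc (rep (x + y) w) * PW \<phi> w)"
    by (rule subst_eq[OF fin]) (auto simp: rep_add fa_add_def)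
  also have "\<dots> = (\<Sum>w\<in>?S. sc (rep x w) * PW \<phi> w) + (\<Sum>w\<in>?S. sc (rep y w) * PW \<phi> w)"
    by (simp add: rep_add fa_add_def sc_add distrib_right sum.distrib)
  also have "\<dots> = subst \<phi> x + subst \<phi> y"
    by (simp add: subst_eq[OF fin, symmetric])
  finally show ?thesis .
qed

lemma subst_sc:
  assumes "inF x"
  shows "subst \<phi> (sc c * x) = sc c * subst \<phi> x"
proof -
  let ?S = "{w. rep x w \<noteq> 0}"
  have fin: "finite ?S" using assms by (simp add: supp_fin)
  have "subst \<phi> (sc c * x) = (\<Sum>w\<in>?S. sc (rep (sc c * x) w) * PW \<phi> w)"
    by (rule subst_eq[OF fin]) (auto simp: rep_sc_mult fa_smult_def)
  also have "\<dots> = sc c * (\<Sum>w\<in>?S. sc (rep x w) * PW \<phi> w)"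
    by (simp add: rep_sc_mult fa_smult_def sc_mult sum_distrib_left mult.assoc)
  also have "\<dots> = sc c * subst \<phi> x" by (simp add: subst_def)
  finally show ?thesis .
qed

lemma PW_append: "PW \<phi> (u @ v) = PW \<phi> u * PW \<phi> v"
  by (simp add: PW_def)

lemma subst_mult:
  assumes x: "inF x" and y: "inF y"
  shows "subst \<phi> (x * y) = subst \<phi> x * subst \<phi> y"
proof -
  define Sx where "Sx = {w. rep x w \<noteq> 0}"
  define Sy where "Sy = {w. rep y w \<noteq> 0}"
  have fx: "finite Sx" and fy: "finite Sy" using x y by (simp_all add: supp_fin Sx_def Sy_def)
  define S where "S = (\<lambda>(u,v). u @ v) ` (Sx \<times> Sy)"
  have fS: "finite S" using fx fy by (simp add: S_def)
  have suppS: "{w. rep (x * y) w \<noteq> 0} \<subseteq> S"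
  proof
    fix w assume "w \<in> {w. rep (x * y) w \<noteq> 0}"
    then have "(\<Sum>p\<in>{(u,v). u @ v = w}. rep x (fst p) * rep y (snd p)) \<noteq> 0" by (simp add: rep_mult fa_mult_splits)
    then obtain p where "p \<in> {(u,v). u @ v = w}" "rep x (fst p) * rep y (snd p) \<noteq> 0"
      by (meson sum.neutral)
    then show "w \<in> S" unfolding S_def Sx_def Sy_def by (intro image_eqI[of _ _ p]) auto
  qed
  define G where "G = (\<lambda>p. sc (rep x (fst p) * rep y (snd p)) * PW \<phi> (fst p @ snd p))"
  have "subst \<phi> (x * y) = (\<Sum>w\<in>S. sc (rep (x * y) w) * PW \<phi> w)"
    by (rule subst_eq[OF fS suppS])
  also have "\<dots> = (\<Sum>w\<in>S. \<Sum>p\<in>{p \<in> Sx \<times> Sy. (\<lambda>(u,v). u @ v) p = w}. G p)"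
  proof (rule sum.cong[OF refl])
    fix w assume "w \<in> S"
    have "sc (rep (x * y) w) * PW \<phi> w = (\<Sum>p\<in>{(u,v). u @ v = w}. G p)"
      by (simp add: rep_mult fa_mult_splits sc_sum sum_distrib_right G_def split_def finite_splits2)
    also have "\<dots> = (\<Sum>p\<in>{p \<in> Sx \<times> Sy. (\<lambda>(u,v). u @ v) p = w}. G p)"
      by (rule sum.mono_neutral_right) (auto simp: finite_splits G_def Sx_def Sy_def sc_zero)
    finally show "sc (rep (x * y) w) * PW \<phi> w = (\<Sum>p\<in>{p \<in> Sx \<times> Sy. (\<lambda>(u,v). u @ v) p = w}. G p)" .
  qed
  also have "\<dots> = (\<Sum>p\<in>Sx \<times> Sy. G p)"
    by (rule sum.group) (use fx fy in \<open>auto simp: S_def\<close>)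
  also have "\<dots> = (\<Sum>u\<in>Sx. \<Sum>v\<in>Sy. G (u, v))"
    by (subst sum.cartesian_product) (simp add: split_def)
  also have "\<dots> = (\<Sum>u\<in>Sx. \<Sum>v\<in>Sy. sc (rep x u) * PW \<phi> u * (sc (rep y v) * PW \<phi> v))"
  proof (intro sum.cong refl)
    fix u v
    have c: "PW \<phi> u * (sc (rep y v) * PW \<phi> v) = sc (rep y v) * (PW \<phi> u * PW \<phi> v)"
      by (simp only: mult.assoc[symmetric] sc_comm[of "rep y v" "PW \<phi> u", symmetric])
    have "sc (rep x u) * PW \<phi> u * (sc (rep y v) * PW \<phi> v) = sc (rep x u) * sc (rep y v) * (PW \<phi> u * PW \<phi> v)"
      by (simp only: mult.assoc c)
    then show "G (u, v) = sc (rep x u) * PW \<phi> u * (sc (rep y v) * PW \<phi> v)"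
      by (simp only: G_def sc_mult PW_append fst_conv snd_conv)
  qed
  also have "\<dots> = subst \<phi> x * subst \<phi> y"
    by (simp only: subst_def Sx_def Sy_def sum_product)
  finally show ?thesis .
qed

lemma inF_PW: "(\<And>i. inF (\<phi> i)) \<Longrightarrow> w \<noteq> [] \<Longrightarrow> inF (PW \<phi> w)"
proof (induction w)
  case Nil then show ?case by simp
next
  case (Cons i w)
  then show ?case by (cases "w = []") (auto simp: PW_def inF_mult)
qed

lemma subst_inF:
  assumes "\<And>i. inF (\<phi> i)" "inF x"
  shows "inF (subst \<phi> x)"
proof -
  have "rep x [] = 0" using assms(2) by (simp add: inF_def FA_def)
  then show ?thesis unfolding subst_def
  proof (intro inF_sum)
    fix w assume "rep x [] = 0" "w \<in> {w. rep x w \<noteq> 0}"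
    then have "w \<noteq> []" by auto
    then show "inF (sc (rep x w) * PW \<phi> w)" by (intro inF_sc inF_PW assms)
  qed (simp add: supp_fin assms)
qed

lemma subst_mn: "subst \<phi> (mn [i]) = \<phi> i"
proof -
  have "subst \<phi> (mn [i]) = (\<Sum>w\<in>{[i]}. sc (rep (mn [i]) w) * PW \<phi> w)"
    by (rule subst_eq) (auto simp: mn.rep_eq fa_mono_def)
  then show ?thesis by (simp add: mn.rep_eq fa_mono_def sc_one PW_def)
qed

definition hom :: "(nat \<Rightarrow> ('k::field) fw) \<Rightarrow> 'k fa \<Rightarrow> 'k fa" where
  "hom \<phi> f = rep (subst \<phi> (abs f))"

lemma hom_endo:
  assumes "\<And>i. inF (\<phi> i)"
  shows "fa_endo (hom \<phi>)"
  unfolding fa_endo_def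
proof (intro conjI ballI allI)
  fix f :: "'a fa" assume "f \<in> FA"
  then show "hom \<phi> f \<in> FA" using subst_inF[OF assms inF_abs] by (simp add: hom_def inF_def)
next
  fix f g :: "'a fa" assume "f \<in> FA" "g \<in> FA"
  then show "hom \<phi> (fa_add f g) = fa_add (hom \<phi> f) (hom \<phi> g)"
    by (simp add: hom_def abs_add subst_add inF_abs rep_add)
next
  fix c and f :: "'a fa" assume "f \<in> FA"
  then show "hom \<phi> (fa_smult c f) = fa_smult c (hom \<phi> f)"
    by (simp add: hom_def abs_smult subst_sc inF_abs rep_sc_mult)
next
  fix f g :: "'a fa" assume "f \<in> FA" "g \<in> FA"
  then show "hom \<phi> (fa_mult f g) = fa_mult (hom \<phi> f) (hom \<phi> g)"
    by (simp add: hom_def abs_mult subst_mult inF_abs rep_mult)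
qed

lemma hom_mono1: "hom \<phi> (fa_mono [i]) = rep (\<phi> i)"
  by (simp add: hom_def mn.abs_eq[symmetric] subst_mn)




section \<open>Permutation sums\<close>

lemma Fs_empty: "Fs {} \<psi> = 1" by (simp add: Fs_def)

lemma Fs_rec:
  assumes "finite K" "K \<noteq> {}"
  shows "Fs K \<psi> = (\<Sum>b\<in>K. \<psi> b * Fs (K - {b}) \<psi>)"
proof -
  obtain m where m: "card K = Suc m" using assms by (cases "card K") auto
  have "\<And>b. b \<in> K \<Longrightarrow> card (K - {b}) = m" using m assms by simp
  then show ?thesis unfolding Fs_def m by (simp cong: sum.cong)
qed

lemma Gf_image: "inj_on f I \<Longrightarrow> Gf n (f ` I) \<psi> g = Gf n I (\<psi> \<circ> f) g"
proof (induction n arbitrary: I g)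
  case 0 then show ?case by simp
next
  case (Suc n)
  have e: "\<And>i. i \<in> I \<Longrightarrow> f ` I - {f i} = f ` (I - {i})" using Suc.prems by (auto simp: inj_on_def)
  have ih: "\<And>i. i \<in> I \<Longrightarrow> Gf n (f ` (I - {i})) \<psi> (\<lambda>k. g (Suc k)) = Gf n (I - {i}) (\<psi> \<circ> f) (\<lambda>k. g (Suc k))"
    using Suc.prems by (intro Suc.IH) (auto intro: inj_on_subset)
  show ?case
    by (simp only: Gf.simps sum.reindex[OF Suc.prems]) (intro sum.cong refl, simp add: e ih)
qed

lemma Fs_image: "inj_on f I \<Longrightarrow> Fs (f ` I) \<psi> = Fs I (\<psi> \<circ> f)"
  by (simp add: Fs_def Gf_image card_image)

lemma perm_sum:
  "distinct L \<Longrightarrow> (\<Sum>\<sigma>\<in>{\<sigma>. \<sigma> permutes set L}. prod_list (map (\<lambda>i. \<psi> (\<sigma> i)) L)) = Fs (set L) (\<psi> :: 'i \<Rightarrow> 'a::ring_1)"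
proof (induction L arbitrary: \<psi>)
  case Nil
  have "{\<sigma>. \<sigma> permutes ({}::'i set)} = {id}" by auto
  then show ?case by (simp add: Fs_empty)
next
  case (Cons a L)
  have aL: "a \<notin> set L" "distinct L" using Cons.prems by auto
  have "(\<Sum>\<sigma>\<in>{\<sigma>. \<sigma> permutes set (a # L)}. prod_list (map (\<lambda>i. \<psi> (\<sigma> i)) (a # L)))
      = (\<Sum>b\<in>insert a (set L). \<Sum>q\<in>{q. q permutes set L}. prod_list (map (\<lambda>i. \<psi> ((transpose a b \<circ> q) i)) (a # L)))"
    by (simp only: set_simps sum_over_permutations_insert[OF finite_set aL(1)])
  also have "\<dots> = (\<Sum>b\<in>insert a (set L). \<psi> b * Fs (insert a (set L) - {b}) \<psi>)"
  proof (rule sum.cong[OF refl])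
    fix b assume b: "b \<in> insert a (set L)"
    have "(\<Sum>q\<in>{q. q permutes set L}. prod_list (map (\<lambda>i. \<psi> ((transpose a b \<circ> q) i)) (a # L)))
        = (\<Sum>q\<in>{q. q permutes set L}. \<psi> b * prod_list (map (\<lambda>i. (\<psi> \<circ> transpose a b) (q i)) L))"
    proof (rule sum.cong[OF refl])
      fix q assume "q \<in> {q. q permutes set L}"
      then have "q a = a" using aL(1) by (simp add: permutes_not_in)
      then show "prod_list (map (\<lambda>i. \<psi> ((transpose a b \<circ> q) i)) (a # L)) = \<psi> b * prod_list (map (\<lambda>i. (\<psi> \<circ> transpose a b) (q i)) L)"
        by simp
    qed
    also have "\<dots> = \<psi> b * Fs (set L) (\<psi> \<circ> transpose a b)"
      by (simp only: sum_distrib_left[symmetric] Cons.IH[OF aL(2)])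
    also have "Fs (set L) (\<psi> \<circ> transpose a b) = Fs (transpose a b ` set L) \<psi>"
      by (rule Fs_image[symmetric]) simp
    also have "transpose a b ` set L = insert a (set L) - {b}"
    proof (cases "b = a")
      case True then show ?thesis using aL by auto
    next
      case False
      then have "b \<in> set L" using b by auto
      then show ?thesis using aL(1) False by (auto simp: transpose_def image_iff)
    qed
    finally show "(\<Sum>q\<in>{q. q permutes set L}. prod_list (map (\<lambda>i. \<psi> ((transpose a b \<circ> q) i)) (a # L))) = \<psi> b * Fs (insert a (set L) - {b}) \<psi>" .
  qed
  also have "\<dots> = Fs (set (a # L)) \<psi>"
    by (simp add: Fs_rec[of "insert a (set L)"])
  finally show ?case .
qed

lemma endo_zero: "fa_endo h \<Longrightarrow> h fa_zero = fa_zero"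
proof -
  assume h: "fa_endo h"
  have "h (fa_add fa_zero fa_zero) = fa_add (h fa_zero) (h fa_zero)" using h FA_zero unfolding fa_endo_def by blast
  moreover have "fa_add fa_zero fa_zero = (fa_zero :: 'a fa)" by (simp add: fa_add_def fa_zero_def)
  ultimately have "h fa_zero = fa_add (h fa_zero) (h fa_zero)" by simp
  then have e: "\<And>w. h fa_zero w = h fa_zero w + h fa_zero w" by (metis fa_add_def)
  show ?thesis
  proof (rule ext)
    fix w
    have "h fa_zero w = 0" using e[of w] add_cancel_right_right by metis
    then show "h fa_zero w = fa_zero w" by (simp add: fa_zero_def)
  qed
qed

lemma endo_sum:
  assumes h: "fa_endo h" and "finite S" "\<And>s. s \<in> S \<Longrightarrow> inF (x s)"
  shows "abs (h (rep (\<Sum>s\<in>S. x s))) = (\<Sum>s\<in>S. abs (h (rep (x s))))"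
  using assms(2,3)
proof (induction S rule: finite_induct)
  case empty
  then show ?case using endo_zero[OF h] by (simp add: rep_zero) (metis rep_zero rep_inverse)
next
  case (insert s S)
  have "rep (\<Sum>s\<in>insert s S. x s) = fa_add (rep (x s)) (rep (\<Sum>s\<in>S. x s))"
    using insert by (simp add: rep_add)
  moreover have "rep (x s) \<in> FA" "rep (\<Sum>s\<in>S. x s) \<in> FA"
    using insert by (auto simp: inF_def[symmetric] intro: inF_sum)
  ultimately have "h (rep (\<Sum>s\<in>insert s S. x s)) = fa_add (h (rep (x s))) (h (rep (\<Sum>s\<in>S. x s)))"
    using h by (simp add: fa_endo_def)
  then show ?case using insert by (simp add: abs_add)
qed

lemma endo_mono:
  assumes h: "fa_endo h" and "L \<noteq> []"
  shows "abs (h (fa_mono L)) = prod_list (map (\<lambda>i. abs (h (fa_mono [i]))) L)"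
  using assms(2)
proof (induction L)
  case Nil then show ?case by simp
next
  case (Cons i L)
  show ?case
  proof (cases "L = []")
    case True then show ?thesis by simp
  next
    case False
    have "fa_mono (i # L) = fa_mult (fa_mono [i]) (fa_mono L)"
      using fa_mono_append[of "[i]" L] by simp
    moreover have "h (fa_mult (fa_mono [i]) (fa_mono L)) = fa_mult (h (fa_mono [i])) (h (fa_mono L))"
      using h FA_mono[of "[i]"] FA_mono[OF False] unfolding fa_endo_def by blast
    ultimately have "h (fa_mono (i # L)) = fa_mult (h (fa_mono [i])) (h (fa_mono L))" by metis
    then show ?thesis using Cons.IH[OF False] by (simp add: abs_mult)
  qed
qed

lemma S_poly_rep:
  "S_poly d = rep (\<Sum>\<sigma>\<in>{\<sigma>. \<sigma> permutes {1..d}}. mn (map \<sigma> [1..<Suc d]))"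
  by (rule ext) (simp add: S_poly_def rep_sum finite_permutations mn.rep_eq)

lemma endo_S_poly:
  assumes h: "fa_endo h" and d: "d \<ge> 1"
  shows "abs (h (S_poly d)) = Fs {1..d} (\<lambda>i. abs (h (fa_mono [i])))"
proof -
  have ne: "map \<sigma> [1..<Suc d] \<noteq> []" for \<sigma> :: "nat \<Rightarrow> nat" using d by simp
  have sL: "set [1..<Suc d] = {1..d}" by auto
  have "abs (h (S_poly d)) = (\<Sum>\<sigma>\<in>{\<sigma>. \<sigma> permutes {1..d}}. abs (h (rep (mn (map \<sigma> [1..<Suc d])))))"
    unfolding S_poly_rep by (rule endo_sum[OF h finite_permutations[OF finite_atLeastAtMost]]) (rule inF_mn[OF ne])
  also have "\<dots> = (\<Sum>\<sigma>\<in>{\<sigma>. \<sigma> permutes set [1..<Suc d]}. prod_list (map (\<lambda>i. abs (h (fa_mono [i]))) (map \<sigma> [1..<Suc d])))"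
  proof (rule sum.cong)
    show "{\<sigma>. \<sigma> permutes {1..d}} = {\<sigma>. \<sigma> permutes set [1..<Suc d]}" by (simp only: sL)
  next
    fix \<sigma> :: "nat \<Rightarrow> nat"
    show "abs (h (rep (mn (map \<sigma> [1..<Suc d])))) = prod_list (map (\<lambda>i. abs (h (fa_mono [i]))) (map \<sigma> [1..<Suc d]))"
      unfolding mn.rep_eq by (rule endo_mono[OF h ne])
  qed
  also have "\<dots> = Fs (set [1..<Suc d]) (\<lambda>i. abs (h (fa_mono [i])))"
    unfolding map_map comp_def by (rule perm_sum) simp
  finally show ?thesis by (simp only: sL)
qed

lemma Fs_in_image:
  assumes "\<And>i. inF (\<psi> i)" "d \<ge> 1"
  shows "\<exists>h. fa_endo h \<and> rep (Fs {1..d} \<psi>) = h (S_poly d)"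
proof (intro exI conjI)
  show "fa_endo (hom \<psi>)" by (rule hom_endo[OF assms(1)])
  have "abs (hom \<psi> (S_poly d)) = Fs {1..d} (\<lambda>i. abs (hom \<psi> (fa_mono [i])))"
    by (rule endo_S_poly[OF hom_endo[OF assms(1)] assms(2)])
  also have "(\<lambda>i. abs (hom \<psi> (fa_mono [i]))) = \<psi>" by (simp add: hom_mono1 rep_inverse)
  finally show "rep (Fs {1..d} \<psi>) = hom \<psi> (S_poly d)" by (metis abs_inverse UNIV_I)
qed




lemma fa_mult_zero_left: "fa_mult fa_zero g = fa_zero"
  by (simp add: fun_eq_iff fa_mult_def fa_zero_def)
lemma fa_mult_zero_right: "fa_mult f fa_zero = fa_zero"
  by (simp add: fun_eq_iff fa_mult_def fa_zero_def)
lemma fa_mult_smult_left: "fa_mult (fa_smult c f) g = fa_smult c (fa_mult f g)"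
  by (simp add: fun_eq_iff fa_mult_def fa_smult_def sum_distrib_left mult.assoc)
lemma fa_mult_smult_right: "fa_mult f (fa_smult c g) = fa_smult c (fa_mult f g)"
  by (simp add: fun_eq_iff fa_mult_def fa_smult_def sum_distrib_left mult.left_commute)
lemma fa_add_zero_left: "fa_add fa_zero f = f" by (simp add: fun_eq_iff fa_add_def fa_zero_def)
lemma fa_add_zero_right: "fa_add f fa_zero = f" by (simp add: fun_eq_iff fa_add_def fa_zero_def)

section \<open>Spans\<close>

inductive_set spn :: "('k::field) fa set \<Rightarrow> 'k fa set" for A where
  spn_zero: "fa_zero \<in> spn A"
| spn_base: "a \<in> A \<Longrightarrow> a \<in> spn A"
| spn_add: "x \<in> spn A \<Longrightarrow> y \<in> spn A \<Longrightarrow> fa_add x y \<in> spn A"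
| spn_smult: "x \<in> spn A \<Longrightarrow> fa_smult c x \<in> spn A"

lemma spn_FA: assumes A: "A \<subseteq> FA" shows "spn A \<subseteq> FA"
proof
  fix x assume x: "x \<in> spn A"
  from x show "x \<in> FA" using A by (induction rule: spn.induct) (auto simp: FA_zero FA_add FA_smult)
qed

lemma spn_subspace: assumes "A \<subseteq> FA" shows "fa_subspace (spn A)"
  using spn_FA[OF assms] unfolding fa_subspace_def by (auto intro: spn.intros)

lemma spn_least: assumes V: "fa_subspace V" "A \<subseteq> V" shows "spn A \<subseteq> V"
proof
  fix x assume x: "x \<in> spn A"
  from x show "x \<in> V" using V by (induction rule: spn.induct) (auto simp: fa_subspace_def)
qed

lemma spn_mono: assumes AB: "A \<subseteq> B" shows "spn A \<subseteq> spn B"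
proof
  fix x assume x: "x \<in> spn A"
  from x show "x \<in> spn B" using AB by (induction rule: spn.induct) (auto intro: spn.intros)
qed

lemma spn_idem: "spn (spn A) = spn A"
proof
  show "spn (spn A) \<subseteq> spn A"
  proof
    fix x assume "x \<in> spn (spn A)"
    then show "x \<in> spn A" by (induction rule: spn.induct) (auto intro: spn.intros)
  qed
qed (auto intro: spn.intros)

definition EI :: "('k::field) fa set \<Rightarrow> 'k fa set" where
  "EI A = {h a | h a. fa_endo h \<and> a \<in> A}"

lemma endo_id: "fa_endo id" by (simp add: fa_endo_def)

lemma endo_comp: "fa_endo g \<Longrightarrow> fa_endo h \<Longrightarrow> fa_endo (g \<circ> h)"
  unfolding fa_endo_def by (simp add: FA_add FA_smult FA_mult)

lemma EI_FA: "A \<subseteq> FA \<Longrightarrow> EI A \<subseteq> FA"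
  unfolding EI_def fa_endo_def by auto

lemma A_EI: "A \<subseteq> EI A"
proof
  fix a assume "a \<in> A"
  then show "a \<in> EI A" unfolding EI_def
    by (intro CollectI exI[of _ id] exI[of _ a] conjI endo_id) auto
qed

lemma endo_spn:
  assumes g: "fa_endo g" and A: "A \<subseteq> FA" and x: "x \<in> spn A"
  shows "g x \<in> spn (g ` A)"
  using x
proof (induction rule: spn.induct)
  case spn_zero then show ?case by (simp add: endo_zero[OF g] spn.spn_zero)
next
  case (spn_base a) then show ?case by (auto intro: spn.spn_base)
next
  case (spn_add x y)
  have "x \<in> FA" "y \<in> FA" using spn_add.hyps spn_FA[OF A] by auto
  then have "g (fa_add x y) = fa_add (g x) (g y)" using g by (simp add: fa_endo_def)
  then show ?case using spn_add.IH by (auto intro: spn.spn_add)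
next
  case (spn_smult x c)
  have "x \<in> FA" using spn_smult.hyps spn_FA[OF A] by auto
  then have "g (fa_smult c x) = fa_smult c (g x)" using g by (simp add: fa_endo_def)
  then show ?case using spn_smult.IH by (auto intro: spn.spn_smult)
qed

lemma EI_closed: assumes g: "fa_endo g" shows "g ` EI A \<subseteq> EI A"
proof
  fix z assume "z \<in> g ` EI A"
  then obtain h a where z: "z = g (h a)" "fa_endo h" "a \<in> A" unfolding EI_def by auto
  then show "z \<in> EI A" unfolding EI_def
    by (intro CollectI exI[of _ "g \<circ> h"] exI[of _ a] conjI endo_comp[OF g]) auto
qed

lemma spn_EI_closed:
  assumes g: "fa_endo g" and A: "A \<subseteq> FA" and f: "f \<in> spn (EI A)"
  shows "g f \<in> spn (EI A)"
proof -
  have "g f \<in> spn (g ` EI A)" by (rule endo_spn[OF g EI_FA[OF A] f])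
  also have "\<dots> \<subseteq> spn (EI A)" by (rule spn_mono[OF EI_closed[OF g]])
  finally show ?thesis .
qed

lemma T_space_spn_EI: "A \<subseteq> FA \<Longrightarrow> T_space (spn (EI A))"
  unfolding T_space_def using spn_subspace[OF EI_FA] spn_EI_closed by blast

lemma T_gen_eq: "A \<subseteq> FA \<Longrightarrow> T_gen A = spn (EI A)"
proof
  assume A: "A \<subseteq> FA"
  show "T_gen A \<subseteq> spn (EI A)"
    unfolding T_gen_def using T_space_spn_EI[OF A] A_EI[of A] spn.spn_base by blast
  show "spn (EI A) \<subseteq> T_gen A"
    unfolding T_gen_def
  proof (rule Inter_greatest)
    fix V assume "V \<in> {V. T_space V \<and> A \<subseteq> V}"
    then have V: "T_space V" "A \<subseteq> V" by auto
    have "EI A \<subseteq> V" using V unfolding EI_def T_space_def by auto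
    then show "spn (EI A) \<subseteq> V" using V by (intro spn_least) (auto simp: T_space_def)
  qed
qed

lemma T_space_T_gen: "A \<subseteq> FA \<Longrightarrow> T_space (T_gen A)"
  by (simp add: T_gen_eq T_space_spn_EI)

lemma T_gen_FA: "A \<subseteq> FA \<Longrightarrow> T_gen A \<subseteq> FA"
  by (simp add: T_gen_eq spn_FA EI_FA)

lemma T_gen_incl: "A \<subseteq> FA \<Longrightarrow> A \<subseteq> T_gen A"
  by (simp add: T_gen_eq) (meson A_EI spn.spn_base subset_iff)

lemma T_space_FA: "T_space V \<Longrightarrow> V \<subseteq> FA" by (simp add: T_space_def fa_subspace_def)

lemma set_mult_FA: "A \<subseteq> FA \<Longrightarrow> B \<subseteq> FA \<Longrightarrow> set_mult A B \<subseteq> FA"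
  unfolding set_mult_def by (auto intro: FA_mult)

lemma T_gen_prod:
  assumes X: "T_space X" and Y: "T_space Y"
  shows "T_gen (set_mult X Y) = spn (set_mult X Y)"
proof -
  have XY: "set_mult X Y \<subseteq> FA" by (rule set_mult_FA[OF T_space_FA[OF X] T_space_FA[OF Y]])
  have "EI (set_mult X Y) \<subseteq> set_mult X Y"
  proof
    fix z assume "z \<in> EI (set_mult X Y)"
    then obtain h x y where z: "z = h (fa_mult x y)" "fa_endo h" "x \<in> X" "y \<in> Y"
      unfolding EI_def set_mult_def by auto
    have "x \<in> FA" "y \<in> FA" using z T_space_FA[OF X] T_space_FA[OF Y] by auto
    then have "z = fa_mult (h x) (h y)" using z by (simp add: fa_endo_def)
    moreover have "h x \<in> X" "h y \<in> Y" using z X Y by (auto simp: T_space_def)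
    ultimately show "z \<in> set_mult X Y" unfolding set_mult_def by auto
  qed
  then have "EI (set_mult X Y) = set_mult X Y" using A_EI by blast
  then show ?thesis using T_gen_eq[OF XY] by simp
qed

lemma spn_mult_left:
  assumes A: "A \<subseteq> FA" and B: "B \<subseteq> FA" and x: "x \<in> spn A" and y: "y \<in> B"
  shows "fa_mult x y \<in> spn (set_mult A B)"
  using x
proof (induction rule: spn.induct)
  case spn_zero then show ?case by (simp add: fa_mult_zero_left spn.spn_zero)
next
  case (spn_base a) then show ?case using y by (auto simp: set_mult_def intro: spn.spn_base)
next
  case (spn_add x1 x2) then show ?case by (simp add: fa_mult_add_left spn.spn_add)
next
  case (spn_smult x c) then show ?case by (simp add: fa_mult_smult_left spn.spn_smult)
qed

lemma spn_mult_both: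
  assumes A: "A \<subseteq> FA" and B: "B \<subseteq> FA" and x: "x \<in> spn A" and y: "y \<in> spn B"
  shows "fa_mult x y \<in> spn (set_mult A B)"
  using y
proof (induction rule: spn.induct)
  case spn_zero then show ?case by (simp add: fa_mult_zero_right spn.spn_zero)
next
  case (spn_base b) then show ?case by (rule spn_mult_left[OF A B x])
next
  case (spn_add y1 y2) then show ?case by (simp add: fa_mult_add_right spn.spn_add)
next
  case (spn_smult y c) then show ?case by (simp add: fa_mult_smult_right spn.spn_smult)
qed

lemma spn_mult:
  assumes A: "A \<subseteq> FA" and B: "B \<subseteq> FA"
  shows "spn (set_mult (spn A) (spn B)) = spn (set_mult A B)"
proof
  show "spn (set_mult (spn A) (spn B)) \<subseteq> spn (set_mult A B)"
  proof -
    have "set_mult (spn A) (spn B) \<subseteq> spn (set_mult A B)"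
      using spn_mult_both[OF A B] by (auto simp: set_mult_def)
    then have "spn (set_mult (spn A) (spn B)) \<subseteq> spn (spn (set_mult A B))" by (rule spn_mono)
    then show ?thesis by (simp add: spn_idem)
  qed
  show "spn (set_mult A B) \<subseteq> spn (set_mult (spn A) (spn B))"
    by (rule spn_mono) (auto simp: set_mult_def intro: spn.spn_base)
qed

lemma set_mult_assoc: "set_mult (set_mult A B) C = set_mult A (set_mult B C)"
  unfolding set_mult_def by (auto simp: fa_mult_assoc) (metis fa_mult_assoc)+




primrec Pw :: "('k::field) fa set \<Rightarrow> nat \<Rightarrow> 'k fa set" where
  "Pw V 0 = V"
| "Pw V (Suc n) = set_mult (Pw V n) V"

lemma Pw_mult: "set_mult (Pw V m) (Pw V n) = Pw V (Suc (m + n))"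
proof (induction n)
  case 0 then show ?case by simp
next
  case (Suc n)
  have "set_mult (Pw V m) (Pw V (Suc n)) = set_mult (set_mult (Pw V m) (Pw V n)) V"
    by (simp add: set_mult_assoc)
  then show ?case using Suc by simp
qed

lemma Pw_FA: "V \<subseteq> FA \<Longrightarrow> Pw V n \<subseteq> FA"
  by (induction n) (auto simp: set_mult_FA)

lemma S_poly_FA: "d \<ge> 1 \<Longrightarrow> S_poly d \<in> FA"
proof -
  assume d: "d \<ge> 1"
  have "inF (\<Sum>\<sigma>\<in>{\<sigma>. \<sigma> permutes {1..d}}. mn (map \<sigma> [1..<Suc d]) :: 'a fw)"
    using d by (intro inF_sum inF_mn) (auto simp: finite_permutations)
  then show ?thesis by (simp add: S_poly_rep inF_def)
qed

lemma S1_props: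
  assumes d: "d \<ge> 1"
  shows "(S_T d (Suc 0) :: ('k::field) fa set) = spn (EI {S_poly d})" "T_space (S_T d (Suc 0) :: 'k fa set)" "(S_T d (Suc 0) :: 'k fa set) \<subseteq> FA"
    "spn (S_T d (Suc 0)) = (S_T d (Suc 0) :: 'k fa set)"
proof -
  have s: "{S_poly d :: 'k fa} \<subseteq> FA" using S_poly_FA[OF d] by simp
  show e: "(S_T d (Suc 0) :: 'k fa set) = spn (EI {S_poly d})" by (simp add: T_gen_eq[OF s])
  show "T_space (S_T d (Suc 0) :: 'k fa set)" by (simp add: T_space_T_gen[OF s])
  then show "(S_T d (Suc 0) :: 'k fa set) \<subseteq> FA" by (rule T_space_FA)
  show "spn (S_T d (Suc 0)) = (S_T d (Suc 0) :: 'k fa set)" by (simp only: e spn_idem)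
qed

lemma S_T_spn:
  assumes d: "d \<ge> 1"
  shows "(S_T d (Suc n) :: ('k::field) fa set) = spn (Pw (S_T d (Suc 0)) n) \<and> T_space (S_T d (Suc n) :: 'k fa set)"
proof (induction n)
  case 0 then show ?case using S1_props(2,4)[OF d] by (metis Pw.simps(1))
next
  case (Suc n)
  have S1FA: "(S_T d (Suc 0) :: 'k fa set) \<subseteq> FA" using S1_props[OF d] by simp
  have "(S_T d (Suc (Suc n)) :: 'k fa set) = T_gen (set_mult (S_T d (Suc n)) (S_T d (Suc 0)))" by simp
  also have "\<dots> = spn (set_mult (S_T d (Suc n)) (S_T d (Suc 0)))"
    by (rule T_gen_prod[OF conjunct2[OF Suc.IH] S1_props(2)[OF d]])
  also have "\<dots> = spn (set_mult (spn (Pw (S_T d (Suc 0)) n)) (spn (S_T d (Suc 0))))"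
    by (simp only: conjunct1[OF Suc.IH] S1_props(4)[OF d])
  also have "\<dots> = spn (Pw (S_T d (Suc 0)) (Suc n))"
    by (simp only: spn_mult[OF Pw_FA[OF S1FA] S1FA] Pw.simps)
  finally have e: "(S_T d (Suc (Suc n)) :: 'k fa set) = spn (Pw (S_T d (Suc 0)) (Suc n))" .
  have "set_mult (S_T d (Suc n)) (S_T d (Suc 0)) \<subseteq> (FA :: 'k fa set)"
    by (rule set_mult_FA[OF T_space_FA[OF conjunct2[OF Suc.IH]] S1FA])
  then have "T_space (S_T d (Suc (Suc n)) :: 'k fa set)"
    unfolding S_T.simps(3) by (rule T_space_T_gen)
  with e show ?case by (intro conjI)
qed

lemma part1:
  assumes d: "d \<ge> 1" and m: "m \<ge> 1" and n: "n \<ge> 1"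
  shows "T_gen (set_mult (S_T d m) (S_T d n)) = (S_T d (m + n) :: ('k::field) fa set)"
proof -
  obtain m' n' where mn: "m = Suc m'" "n = Suc n'" using m n by (cases m; cases n) auto
  have S1FA: "(S_T d (Suc 0) :: 'k fa set) \<subseteq> FA" using S1_props[OF d] by simp
  have "T_gen (set_mult (S_T d m) (S_T d n)) = spn (set_mult (S_T d m) (S_T d n) :: 'k fa set)"
      unfolding mn by (rule T_gen_prod[OF conjunct2[OF S_T_spn[OF d]] conjunct2[OF S_T_spn[OF d]]])
  also have "\<dots> = spn (set_mult (spn (Pw (S_T d (Suc 0)) m')) (spn (Pw (S_T d (Suc 0)) n')))"
    by (simp only: mn conjunct1[OF S_T_spn[OF d, of m']] conjunct1[OF S_T_spn[OF d, of n']])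
  also have "\<dots> = spn (Pw (S_T d (Suc 0)) (Suc (m' + n')))"
    by (simp only: spn_mult[OF Pw_FA[OF S1FA] Pw_FA[OF S1FA]] Pw_mult)
  also have "\<dots> = S_T d (m + n)"
    by (simp only: mn conjunct1[OF S_T_spn[OF d, of "Suc (m' + n')"]] add_Suc add_Suc_right)
  finally show ?thesis .
qed

lemma set_add_subspace:
  assumes A: "fa_subspace A" and B: "fa_subspace B"
  shows "fa_subspace (set_add A B)"
  unfolding fa_subspace_def
proof (intro conjI ballI allI)
  show "set_add A B \<subseteq> FA" using A B unfolding fa_subspace_def set_add_def by (auto intro: FA_add)
  show "fa_zero \<in> set_add A B" using A B unfolding fa_subspace_def set_add_def
    by (intro CollectI exI[of _ fa_zero] conjI) (auto simp: fa_add_zero_left)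
next
  fix x y assume "x \<in> set_add A B" "y \<in> set_add A B"
  then obtain a b a' b' where xy: "x = fa_add a b" "y = fa_add a' b'" "a \<in> A" "b \<in> B" "a' \<in> A" "b' \<in> B"
    unfolding set_add_def by blast
  have "fa_add x y = fa_add (fa_add a a') (fa_add b b')" using xy by (auto simp: fun_eq_iff fa_add_def)
  moreover have "fa_add a a' \<in> A" "fa_add b b' \<in> B" using A B xy unfolding fa_subspace_def by auto
  ultimately show "fa_add x y \<in> set_add A B" unfolding set_add_def by blast
next
  fix c x assume "x \<in> set_add A B"
  then obtain a b where xy: "x = fa_add a b" "a \<in> A" "b \<in> B"
    unfolding set_add_def by blast
  have "fa_smult c x = fa_add (fa_smult c a) (fa_smult c b)" using xy by (auto simp: fun_eq_iff fa_add_def fa_smult_def ring_distribs)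
  moreover have "fa_smult c a \<in> A" "fa_smult c b \<in> B" using A B xy unfolding fa_subspace_def by auto
  ultimately show "fa_smult c x \<in> set_add A B" unfolding set_add_def by blast
qed

lemma sub_add: "fa_subspace V \<Longrightarrow> rep x \<in> V \<Longrightarrow> rep y \<in> V \<Longrightarrow> rep (x + y) \<in> V"
  by (simp add: rep_add fa_subspace_def)

lemma sub_diff: "fa_subspace V \<Longrightarrow> rep x \<in> V \<Longrightarrow> rep y \<in> V \<Longrightarrow> rep (x - y) \<in> V"
proof -
  assume V: "fa_subspace V" "rep x \<in> V" "rep y \<in> V"
  have "rep (x - y) = fa_add (rep x) (fa_smult (-1) (rep y))"
    by (simp add: rep_minus fun_eq_iff fa_add_def fa_smult_def)
  then show ?thesis using V by (simp add: fa_subspace_def)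
qed

lemma sub_sum:
  assumes V: "fa_subspace V" and fin: "finite J" and f: "\<And>j. j \<in> J \<Longrightarrow> rep (f j) \<in> V"
  shows "rep (\<Sum>j\<in>J. f j) \<in> V"
  using fin f
proof (induction J rule: finite_induct)
  case empty then show ?case using V by (simp add: rep_zero fa_subspace_def)
next
  case (insert j J) then show ?case by (simp add: sub_add[OF V])
qed

lemma inF_upd: "(\<And>i. inF (f i)) \<Longrightarrow> inF v \<Longrightarrow> inF ((f(a := v)) i)"
  by simp

lemma key_member:
  fixes M N :: "('k::field) fa"
  assumes d: "d \<ge> 1" and m: "m \<ge> 1" and M: "M \<in> S_T d m" and N: "N \<in> S_T d m" and h: "fa_endo h"
  shows "fa_mult (fa_mult M (h (S_poly d))) N \<in> set_add (S_T d (Suc m)) (S_T d (Suc 0))"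
proof -
  obtain k where k: "m = Suc k" using m by (cases m) auto
  have Tm: "T_space (S_T d m :: 'k fa set)" using conjunct2[OF S_T_spn[OF d, of k]] k by simp
  have Tm1: "T_space (S_T d (Suc m) :: 'k fa set)" using conjunct2[OF S_T_spn[OF d, of m]] by simp
  have T1: "T_space (S_T d (Suc 0) :: 'k fa set)" by (rule S1_props(2)[OF d])
  define V where "V = set_add (S_T d (Suc m)) (S_T d (Suc 0) :: 'k fa set)"
  have Vsub: "fa_subspace V" unfolding V_def
    using Tm1 T1 by (intro set_add_subspace) (auto simp: T_space_def)
  have S1V: "x \<in> V" if "x \<in> S_T d (Suc 0)" for x
  proof -
    have "fa_zero \<in> (S_T d (Suc m) :: 'k fa set)" using Tm1 by (simp add: T_space_def fa_subspace_def)
    then show ?thesis using that unfolding V_def set_add_def by (intro CollectI exI conjI) (auto simp: fa_add_zero_left)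
  qed
  have SmV: "x \<in> V" if "x \<in> S_T d (Suc m)" for x
  proof -
    have "fa_zero \<in> (S_T d (Suc 0) :: 'k fa set)" using T1 by (simp add: T_space_def fa_subspace_def)
    then show ?thesis using that unfolding V_def set_add_def by (intro CollectI exI conjI) (auto simp: fa_add_zero_right)
  qed
  have MFA: "M \<in> FA" "N \<in> FA" using M N T_space_FA[OF Tm] by auto
  have S1FA: "(S_T d (Suc 0) :: 'k fa set) \<subseteq> FA" by (rule S1_props(3)[OF d])
  have F1: "rep (Fs {1..d} \<psi>) \<in> (S_T d (Suc 0) :: 'k fa set)" if \<psi>F0: "\<And>i. inF (\<psi> i)" for \<psi>
  proof -
    have ex: "\<exists>h'. fa_endo h' \<and> rep (Fs {1..d} \<psi>) = h' (S_poly d)" by (rule Fs_in_image[OF \<psi>F0 d])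
    then obtain h' where h': "fa_endo h'" "rep (Fs {1..d} \<psi>) = h' (S_poly d)" by (elim exE conjE)
    have "rep (Fs {1..d} \<psi>) \<in> EI {S_poly d}" unfolding EI_def
      using h' by (intro CollectI exI[of _ h'] exI[of _ "S_poly d"]) simp
    then have "rep (Fs {1..d} \<psi>) \<in> spn (EI {S_poly d})" by (rule spn.spn_base)
    then show ?thesis by (simp only: S1_props(1)[OF d])
  qed
  have F2: "rep (abs M * Fs {1..d} \<psi>) \<in> (S_T d (Suc m) :: 'k fa set)" if \<psi>F2: "\<And>i. inF (\<psi> i)" for \<psi>
  proof -
    have "rep (abs M * Fs {1..d} \<psi>) = fa_mult M (rep (Fs {1..d} \<psi>))" by (simp add: rep_mult abs_inverse)
    also have "\<dots> \<in> set_mult (S_T d m) (S_T d (Suc 0))" unfolding set_mult_def using M F1[of \<psi>, OF \<psi>F2] by blast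
    also have "\<dots> \<subseteq> T_gen (set_mult (S_T d m) (S_T d (Suc 0)))"
      by (rule T_gen_incl[OF set_mult_FA[OF T_space_FA[OF Tm] S1FA]])
    also have "\<dots> = S_T d (Suc m)" using k by simp
    finally show ?thesis .
  qed
  have F3: "rep (Fs {1..d} \<psi> * abs N) \<in> (S_T d (Suc m) :: 'k fa set)" if \<psi>F3: "\<And>i. inF (\<psi> i)" for \<psi>
  proof -
    have "rep (Fs {1..d} \<psi> * abs N) = fa_mult (rep (Fs {1..d} \<psi>)) N" by (simp add: rep_mult abs_inverse)
    also have "\<dots> \<in> set_mult (S_T d (Suc 0)) (S_T d m)" unfolding set_mult_def using N F1[of \<psi>, OF \<psi>F3] by blast
    also have "\<dots> \<subseteq> T_gen (set_mult (S_T d (Suc 0)) (S_T d m))"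
      by (rule T_gen_incl[OF set_mult_FA[OF S1FA T_space_FA[OF Tm]]])
    also have "\<dots> = S_T d (Suc 0 + m)" by (rule part1[OF d _ m]) simp
    finally show ?thesis by simp
  qed
  define \<psi> where "\<psi> = (\<lambda>i. abs (h (fa_mono [i])) :: 'k fw)"
  have \<psi>F: "inF (\<psi> i)" for i
  proof -
    have "h (fa_mono [i]) \<in> FA" using h FA_mono[of "[i]"] unfolding fa_endo_def by blast
    then show ?thesis unfolding \<psi>_def by (rule inF_abs)
  qed
  define X where "X = (abs M :: 'k fw)"
  define Y where "Y = (abs N :: 'k fw)"
  have XY: "inF X" "inF Y" using MFA by (simp_all add: X_def Y_def inF_abs)
  have F2X: "rep (X * Fs {1..d} \<psi>') \<in> (S_T d (Suc m) :: 'k fa set)" if \<psi>'F: "\<And>i. inF (\<psi>' i)" for \<psi>'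
    unfolding X_def by (rule F2[of \<psi>', OF \<psi>'F])
  have F3Y: "rep (Fs {1..d} \<psi>' * Y) \<in> (S_T d (Suc m) :: 'k fa set)" if \<psi>'F: "\<And>i. inF (\<psi>' i)" for \<psi>'
    unfolding Y_def by (rule F3[of \<psi>', OF \<psi>'F])
  have hs: "abs (h (S_poly d)) = Fs {1..d} \<psi>" unfolding \<psi>_def by (rule endo_S_poly[OF h d])
  have eq: "fa_mult (fa_mult M (h (S_poly d))) N = rep (X * Fs {1..d} \<psi> * Y)"
  proof -
    have hs': "rep (Fs {1..d} \<psi>) = h (S_poly d)" using hs by (metis abs_inverse UNIV_I)
    show ?thesis unfolding X_def Y_def rep_mult hs' by (simp add: abs_inverse)
  qed
  define J where "J = {2..d}"
  have J: "finite J" "Suc 0 \<notin> J" by (auto simp: J_def)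
  have ins: "insert (Suc 0) J = {1..d}" using d by (auto simp: J_def)
  have ident: "X * Fs {1..d} \<psi> * Y =
     Fs {1..d} (\<psi>(Suc 0 := X * \<psi> (Suc 0))) * Y
   + (\<Sum>j\<in>J. Fs {1..d} (\<psi>(Suc 0 := X * \<psi> (Suc 0), j := Y * \<psi> j)))
   - (\<Sum>j\<in>J. Fs {1..d} (\<psi>(Suc 0 := Y, j := \<psi> j * (X * \<psi> (Suc 0)))))
   - (\<Sum>j\<in>J. X * Fs {1..d} (\<psi>(j := Y * \<psi> j)))
   + (\<Sum>j\<in>J. X * Fs {1..d} (\<psi>(Suc 0 := Y, j := \<psi> j * \<psi> (Suc 0))))"
    using key_identity[OF J, of X \<psi> Y] unfolding ins .
  have "rep (X * Fs {1..d} \<psi> * Y) \<in> V"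
    unfolding ident
    apply (intro sub_add[OF Vsub] sub_diff[OF Vsub] sub_sum[OF Vsub J(1)])
        apply (rule SmV, rule F3Y, intro inF_upd \<psi>F inF_mult XY)
       apply (rule S1V, rule F1, intro inF_upd \<psi>F inF_mult XY)
      apply (rule S1V, rule F1, intro inF_upd \<psi>F inF_mult XY)
     apply (rule SmV, rule F2X, intro inF_upd \<psi>F inF_mult XY)
    apply (rule SmV, rule F2X, intro inF_upd \<psi>F inF_mult XY)
    done
  then show ?thesis unfolding eq V_def .
qed




lemma part2:
  assumes d: "d \<ge> 1" and m: "m \<ge> 1"
  shows "(S_T d (2 * m + 1) :: ('k::field) fa set) \<subseteq> set_add (S_T d (m + 1)) (S_T d 1)"
proof -
  obtain k where k: "m = Suc k" using m by (cases m) auto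
  have S1FA: "(S_T d (Suc 0) :: 'k fa set) \<subseteq> FA" by (rule S1_props(3)[OF d])
  have T1: "T_space (S_T d (Suc 0) :: 'k fa set)" by (rule S1_props(2)[OF d])
  have Tm1: "T_space (S_T d (Suc m) :: 'k fa set)" by (rule conjunct2[OF S_T_spn[OF d, of m]])
  define V where "V = set_add (S_T d (Suc m)) (S_T d (Suc 0) :: 'k fa set)"
  have Vsub: "fa_subspace V" unfolding V_def
    using Tm1 T1 by (intro set_add_subspace) (auto simp: T_space_def)
  have ar: "2 * m + 1 = Suc (Suc (Suc k + k))" using k by simp
  have e1: "(S_T d (2 * m + 1) :: 'k fa set) = spn (Pw (S_T d (Suc 0)) (Suc (Suc k + k)))"
    unfolding ar by (rule conjunct1[OF S_T_spn[OF d]])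
  have e2: "Pw (S_T d (Suc 0) :: 'k fa set) (Suc (Suc k + k)) = set_mult (set_mult (Pw (S_T d (Suc 0)) k) (S_T d (Suc 0))) (Pw (S_T d (Suc 0)) k)"
    using Pw_mult[of "S_T d (Suc 0) :: 'k fa set" "Suc k" k] by simp
  have PwS: "Pw (S_T d (Suc 0) :: 'k fa set) k \<subseteq> S_T d m"
  proof -
    have "Pw (S_T d (Suc 0) :: 'k fa set) k \<subseteq> spn (Pw (S_T d (Suc 0)) k)" by (auto intro: spn.spn_base)
    also have "\<dots> = S_T d (Suc k)" by (rule conjunct1[OF S_T_spn[OF d], symmetric])
    finally show ?thesis using k by simp
  qed
  have main: "set_mult (set_mult (Pw (S_T d (Suc 0)) k) (S_T d (Suc 0))) (Pw (S_T d (Suc 0) :: 'k fa set) k) \<subseteq> V"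
  proof
    fix z assume "z \<in> set_mult (set_mult (Pw (S_T d (Suc 0)) k) (S_T d (Suc 0))) (Pw (S_T d (Suc 0) :: 'k fa set) k)"
    then obtain M b N where z: "z = fa_mult (fa_mult M b) N" and MbN: "M \<in> Pw (S_T d (Suc 0) :: 'k fa set) k" "b \<in> (S_T d (Suc 0) :: 'k fa set)" "N \<in> Pw (S_T d (Suc 0) :: 'k fa set) k"
      unfolding set_mult_def by blast
    have MN: "M \<in> S_T d m" "N \<in> S_T d m" using MbN PwS by auto
    have b: "b \<in> spn (EI {S_poly d})" using MbN(2) unfolding S1_props(1)[OF d] .
    have "fa_mult (fa_mult M b') N \<in> V" if "b' \<in> spn (EI {S_poly d})" for b'
      using that
    proof (induction rule: spn.induct)
      case spn_zero
      then show ?case using Vsub by (simp add: fa_mult_zero_left fa_mult_zero_right fa_subspace_def)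
    next
      case (spn_base a)
      then obtain h where "a = h (S_poly d)" "fa_endo h" unfolding EI_def by blast
      then show ?case unfolding V_def using key_member[OF d m MN] by simp
    next
      case (spn_add x y)
      then show ?case using Vsub by (simp add: fa_mult_add_left fa_mult_add_right fa_subspace_def)
    next
      case (spn_smult x c)
      then show ?case using Vsub by (simp add: fa_mult_smult_left fa_mult_smult_right fa_subspace_def)
    qed
    then show "z \<in> V" using z b by simp
  qed
  have "(S_T d (2 * m + 1) :: 'k fa set) \<subseteq> V"
    unfolding e1 e2 by (rule spn_least[OF Vsub main])
  then show ?thesis by (simp add: V_def)
qed

theorem corollary3p2:
  fixes p d :: nat
  assumes "prime p" and "CHAR('k::field) = p" and "d \<ge> 1"
  shows "(\<forall>m n. m \<ge> 1 \<longrightarrow> n \<ge> 1 \<longrightarrow>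
            T_gen (set_mult (S_T d m) (S_T d n)) = (S_T d (m + n) :: 'k fa set))
       \<and> (\<forall>m. m \<ge> 1 \<longrightarrow>
            (S_T d (2 * m + 1) :: 'k fa set) \<subseteq> set_add (S_T d (m + 1)) (S_T d 1))"
  using part1[OF assms(3)] part2[OF assms(3)] by blast


end
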